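(* A tree $T$ satisfies $D(T)=\dim(T)+1$ if and only if $T$ is isomorphic to $P_n$ or to $K_{1,n}$ for some $n\ge 2$.
   Context: All graphs are finite and simple; $P_n$ is the path on $n$ vertices and $K_{1,n}$ the star with $n$ leaves. For a connected graph $G$ with shortest-path distance $d_G$, a set $S\subseteq V(G)$ is resolving if for any two distinct vertices $x,y$ there is $s\in S$ with $d_G(x,s)\neq d_G(y,s)$; the metric dimension $\dim(G)$ is the minimum size of a resolving set. A distinguishing coloring of a graph $G$ is a (not necessarily proper) vertex coloring such that the only automorphism of $G$ mapping every vertex to a vertex of the same color is the identity; the distinguishing number $D(G)$ is the minimum number of colors in a distinguishing coloring of $G$. *)

theory Defs
  imports Main
begin

definition simple_graph :: "'a set \<Rightarrow> ('a \<Rightarrow> 'a \<Rightarrow> bool) \<Rightarrow> bool" where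
  "simple_graph V E \<longleftrightarrow> finite V \<and>
     (\<forall>x y. E x y \<longrightarrow> x \<in> V \<and> y \<in> V \<and> x \<noteq> y \<and> E y x)"

definition walk :: "'a set \<Rightarrow> ('a \<Rightarrow> 'a \<Rightarrow> bool) \<Rightarrow> 'a list \<Rightarrow> bool" where
  "walk V E p \<longleftrightarrow> p \<noteq> [] \<and> set p \<subseteq> V \<and> (\<forall>i. Suc i < length p \<longrightarrow> E (p ! i) (p ! Suc i))"

definition connected_graph :: "'a set \<Rightarrow> ('a \<Rightarrow> 'a \<Rightarrow> bool) \<Rightarrow> bool" where
  "connected_graph V E \<longleftrightarrow> V \<noteq> {} \<and>
     (\<forall>x\<in>V. \<forall>y\<in>V. \<exists>p. walk V E p \<and> hd p = x \<and> last p = y)"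

definition is_cycle :: "'a set \<Rightarrow> ('a \<Rightarrow> 'a \<Rightarrow> bool) \<Rightarrow> 'a list \<Rightarrow> bool" where
  "is_cycle V E c \<longleftrightarrow> walk V E c \<and> length c \<ge> 3 \<and> distinct c \<and> E (last c) (hd c)"

definition is_tree :: "'a set \<Rightarrow> ('a \<Rightarrow> 'a \<Rightarrow> bool) \<Rightarrow> bool" where
  "is_tree V E \<longleftrightarrow> simple_graph V E \<and> connected_graph V E \<and> (\<nexists>c. is_cycle V E c)"

definition gdist :: "'a set \<Rightarrow> ('a \<Rightarrow> 'a \<Rightarrow> bool) \<Rightarrow> 'a \<Rightarrow> 'a \<Rightarrow> nat" where
  "gdist V E x y = (LEAST n. \<exists>p. walk V E p \<and> hd p = x \<and> last p = y \<and> length p = Suc n)"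

definition resolving :: "'a set \<Rightarrow> ('a \<Rightarrow> 'a \<Rightarrow> bool) \<Rightarrow> 'a set \<Rightarrow> bool" where
  "resolving V E S \<longleftrightarrow> S \<subseteq> V \<and>
     (\<forall>x\<in>V. \<forall>y\<in>V. x \<noteq> y \<longrightarrow> (\<exists>s\<in>S. gdist V E x s \<noteq> gdist V E y s))"

definition metric_dim :: "'a set \<Rightarrow> ('a \<Rightarrow> 'a \<Rightarrow> bool) \<Rightarrow> nat" where
  "metric_dim V E = (LEAST k. \<exists>S. resolving V E S \<and> card S = k)"

definition automorphism :: "'a set \<Rightarrow> ('a \<Rightarrow> 'a \<Rightarrow> bool) \<Rightarrow> ('a \<Rightarrow> 'a) \<Rightarrow> bool" where
  "automorphism V E f \<longleftrightarrow> bij_betw f V V \<and> (\<forall>x\<in>V. \<forall>y\<in>V. E x y \<longleftrightarrow> E (f x) (f y))"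

definition distinguishing_coloring ::
  "'a set \<Rightarrow> ('a \<Rightarrow> 'a \<Rightarrow> bool) \<Rightarrow> nat \<Rightarrow> ('a \<Rightarrow> nat) \<Rightarrow> bool" where
  "distinguishing_coloring V E k c \<longleftrightarrow> c ` V \<subseteq> {..<k} \<and>
     (\<forall>f. automorphism V E f \<and> (\<forall>x\<in>V. c (f x) = c x) \<longrightarrow> (\<forall>x\<in>V. f x = x))"

definition distinguishing_number :: "'a set \<Rightarrow> ('a \<Rightarrow> 'a \<Rightarrow> bool) \<Rightarrow> nat" where
  "distinguishing_number V E = (LEAST k. \<exists>c. distinguishing_coloring V E k c)"

definition graph_iso ::
  "'a set \<Rightarrow> ('a \<Rightarrow> 'a \<Rightarrow> bool) \<Rightarrow> 'b set \<Rightarrow> ('b \<Rightarrow> 'b \<Rightarrow> bool) \<Rightarrow> bool" where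
  "graph_iso V E W F \<longleftrightarrow> (\<exists>f. bij_betw f V W \<and> (\<forall>x\<in>V. \<forall>y\<in>V. E x y \<longleftrightarrow> F (f x) (f y)))"

definition path_V :: "nat \<Rightarrow> nat set" where "path_V n = {..<n}"
definition path_E :: "nat \<Rightarrow> nat \<Rightarrow> bool" where "path_E i j \<longleftrightarrow> i = Suc j \<or> j = Suc i"
definition star_V :: "nat \<Rightarrow> nat set" where "star_V n = {0..n}"
definition star_E :: "nat \<Rightarrow> nat \<Rightarrow> bool" where
  "star_E i j \<longleftrightarrow> (i = 0 \<and> j \<noteq> 0) \<or> (j = 0 \<and> i \<noteq> 0)"

end

theory Submission
  imports Defs
begin


lemma walk_single[simp]: "walk V E [x] \<longleftrightarrow> x \<in> V"
  by (auto simp: walk_def)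

lemma walk_Cons_Cons[simp]: "walk V E (x#y#p) \<longleftrightarrow> x \<in> V \<and> E x y \<and> walk V E (y#p)"
proof
  assume w: "walk V E (x#y#p)"
  show "x \<in> V \<and> E x y \<and> walk V E (y#p)"
  proof (intro conjI)
    show "x \<in> V" using w by (auto simp: walk_def)
    show "E x y" using w unfolding walk_def by (auto dest!: spec[where x=0])
    show "walk V E (y#p)" unfolding walk_def
    proof (intro conjI allI impI)
      show "y # p \<noteq> []" by simp
      show "set (y # p) \<subseteq> V" using w by (auto simp: walk_def)
      fix i assume "Suc i < length (y # p)"
      then have "Suc (Suc i) < length (x#y#p)" by simp
      then have "E ((x#y#p) ! Suc i) ((x#y#p) ! Suc (Suc i))" using w unfolding walk_def by blast
      then show "E ((y # p) ! i) ((y # p) ! Suc i)" by simp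
    qed
  qed
next
  assume h: "x \<in> V \<and> E x y \<and> walk V E (y#p)"
  show "walk V E (x#y#p)"
    unfolding walk_def
  proof (intro conjI allI impI)
    show "x # y # p \<noteq> []" by simp
    show "set (x # y # p) \<subseteq> V" using h by (auto simp: walk_def)
    fix i assume "Suc i < length (x # y # p)"
    then show "E ((x # y # p) ! i) ((x # y # p) ! Suc i)"
      using h by (cases i) (auto simp: walk_def)
  qed
qed

lemma walk_nonempty: "walk V E p \<Longrightarrow> p \<noteq> []" by (simp add: walk_def)
lemma walk_set: "walk V E p \<Longrightarrow> set p \<subseteq> V" by (simp add: walk_def)

lemma walk_Cons: "walk V E (x#p) \<Longrightarrow> p \<noteq> [] \<Longrightarrow> walk V E p"
  by (cases p) auto

lemma walk_append:
  "walk V E p \<Longrightarrow> walk V E q \<Longrightarrow> E (last p) (hd q) \<Longrightarrow> walk V E (p @ q)"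
proof (induction p rule: induct_list012)
  case 1 then show ?case by (simp add: walk_def)
next
  case (2 x) then show ?case by (cases q) auto
next
  case (3 x y zs) then show ?case by auto
qed

lemma walk_join:
  assumes wp: "walk V E p" and wq: "walk V E q" and e: "last p = hd q"
  shows "walk V E (p @ tl q)"
proof (cases "tl q")
  case Nil then show ?thesis using wp by simp
next
  case (Cons a r)
  obtain b where q: "q = b # a # r" using Cons wq by (cases q) (auto simp: walk_def)
  show ?thesis using walk_append[OF wp walk_Cons[of V E b "a#r"]] wq e q by auto
qed

lemma walk_rev:
  assumes sym: "\<And>x y. x \<in> V \<Longrightarrow> y \<in> V \<Longrightarrow> E x y \<Longrightarrow> E y x"
  shows "walk V E p \<Longrightarrow> walk V E (rev p)"
proof (induction p rule: induct_list012)
  case 1 then show ?case by simp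
next
  case (2 x) then show ?case by simp
next
  case (3 x y zs)
  have w1: "walk V E (y#zs)" using 3(3) by simp
  have w2: "walk V E (rev (y#zs))" using 3(2)[OF w1] .
  have xy: "x \<in> V" "y \<in> V" "E x y" using 3(3) by (auto simp: walk_def)
  have "walk V E (rev (y#zs) @ [x])"
    using walk_append[OF w2, of "[x]"] xy sym by auto
  then show ?case by simp
qed

lemma walk_drop: "walk V E p \<Longrightarrow> i < length p \<Longrightarrow> walk V E (drop i p)"
proof (induction i arbitrary: p)
  case 0 then show ?case by simp
next
  case (Suc i)
  then obtain x q where p: "p = x # q" by (cases p) auto
  with Suc have "q \<noteq> []" by auto
  with Suc p show ?case using walk_Cons[of V E x q] by auto
qed

lemma walk_take: "walk V E p \<Longrightarrow> 0 < j \<Longrightarrow> walk V E (take j p)"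
proof (induction p arbitrary: j rule: induct_list012)
  case 1 then show ?case by simp
next
  case (2 x) then show ?case by (cases j) auto
next
  case (3 x y zs)
  show ?case
  proof (cases j)
    case 0 then show ?thesis using 3 by simp
  next
    case (Suc j')
    show ?thesis
    proof (cases j')
      case 0 then show ?thesis using 3 Suc by simp
    next
      case (Suc j'')
      have "walk V E (take (Suc j'') (y#zs))" using 3(2)[of "Suc j''"] 3(3) by simp
      then show ?thesis using 3 \<open>j = Suc j'\<close> Suc by auto
    qed
  qed
qed

definition isom :: "'a set \<Rightarrow> ('a \<Rightarrow> 'a \<Rightarrow> bool) \<Rightarrow> 'b set \<Rightarrow> ('b \<Rightarrow> 'b \<Rightarrow> bool) \<Rightarrow> ('a \<Rightarrow> 'b) \<Rightarrow> bool" where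
  "isom V E W F f \<longleftrightarrow> bij_betw f V W \<and> (\<forall>x\<in>V. \<forall>y\<in>V. E x y \<longleftrightarrow> F (f x) (f y))"

lemma walk_map: "isom V E W F f \<Longrightarrow> walk V E p \<Longrightarrow> walk W F (map f p)"
proof (induction p rule: induct_list012)
  case 1 then show ?case by (simp add: walk_def)
next
  case (2 x) then show ?case by (auto simp: isom_def bij_betw_def)
next
  case (3 x y zs)
  then have "y \<in> V" by (auto simp: walk_def)
  with 3 show ?case by (auto simp: isom_def bij_betw_def)
qed

lemma isom_inv: "isom V E W F f \<Longrightarrow> isom W F V E (inv_into V f)"
  unfolding isom_def
proof (intro conjI ballI)
  assume h: "bij_betw f V W \<and> (\<forall>x\<in>V. \<forall>y\<in>V. E x y = F (f x) (f y))"
  then show "bij_betw (inv_into V f) W V" by (simp add: bij_betw_inv_into)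
  fix x y assume "x \<in> W" "y \<in> W"
  then show "F x y = E (inv_into V f x) (inv_into V f y)"
  proof -
    have b: "bij_betw f V W" using h by simp
    have 1: "inv_into V f x \<in> V" "inv_into V f y \<in> V"
      using bij_betw_inv_into[OF b] \<open>x \<in> W\<close> \<open>y \<in> W\<close> by (auto simp: bij_betw_def)
    have 2: "f (inv_into V f x) = x" "f (inv_into V f y) = y"
      using bij_betw_inv_into_right[OF b] \<open>x \<in> W\<close> \<open>y \<in> W\<close> by auto
    show ?thesis using h 1 2 by metis
  qed
qed

lemma isom_comp: "isom U D V E f \<Longrightarrow> isom V E W F g \<Longrightarrow> isom U D W F (g \<circ> f)"
  unfolding isom_def by (auto intro: bij_betw_trans simp: bij_betw_def comp_inj_on)

lemma automorphism_isom: "automorphism V E f \<longleftrightarrow> isom V E V E f"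
  by (simp add: automorphism_def isom_def)

lemma gdist_isom:
  assumes "isom V E W F f" "x \<in> V" "y \<in> V"
  shows "gdist W F (f x) (f y) = gdist V E x y"
proof -
  let ?g = "inv_into V f"
  have ig: "isom W F V E ?g" using isom_inv[OF assms(1)] .
  have b: "bij_betw f V W" using assms(1) by (simp add: isom_def)
  have gf: "\<And>v. v \<in> V \<Longrightarrow> ?g (f v) = v" using b by (simp add: bij_betw_def)
  have "(\<exists>p. walk W F p \<and> hd p = f x \<and> last p = f y \<and> length p = Suc n) \<longleftrightarrow>
        (\<exists>p. walk V E p \<and> hd p = x \<and> last p = y \<and> length p = Suc n)" for n
  proof
    assume "\<exists>p. walk W F p \<and> hd p = f x \<and> last p = f y \<and> length p = Suc n"
    then obtain p where p: "walk W F p" "hd p = f x" "last p = f y" "length p = Suc n" by blast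
    have "walk V E (map ?g p)" using walk_map[OF ig p(1)] .
    moreover have "p \<noteq> []" using p(4) by auto
    ultimately show "\<exists>p. walk V E p \<and> hd p = x \<and> last p = y \<and> length p = Suc n"
      using p assms gf by (intro exI[of _ "map ?g p"]) (auto simp: hd_map last_map)
  next
    assume "\<exists>p. walk V E p \<and> hd p = x \<and> last p = y \<and> length p = Suc n"
    then obtain p where p: "walk V E p" "hd p = x" "last p = y" "length p = Suc n" by blast
    have "walk W F (map f p)" using walk_map[OF assms(1) p(1)] .
    moreover have "p \<noteq> []" using p(4) by auto
    ultimately show "\<exists>p. walk W F p \<and> hd p = f x \<and> last p = f y \<and> length p = Suc n"
      using p by (intro exI[of _ "map f p"]) (auto simp: hd_map last_map)
  qed
  then show ?thesis unfolding gdist_def by simp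
qed


locale cg =
  fixes V :: "'a set" and E :: "'a \<Rightarrow> 'a \<Rightarrow> bool"
  assumes finV: "finite V"
    and symE: "\<And>x y. x \<in> V \<Longrightarrow> y \<in> V \<Longrightarrow> E x y \<Longrightarrow> E y x"
    and conn: "\<And>x y. x \<in> V \<Longrightarrow> y \<in> V \<Longrightarrow> \<exists>p. walk V E p \<and> hd p = x \<and> last p = y"
begin

abbreviation d where "d \<equiv> gdist V E"

lemma gd_ex:
  assumes "x \<in> V" "y \<in> V"
  shows "\<exists>p. walk V E p \<and> hd p = x \<and> last p = y \<and> length p = Suc (d x y)"
proof -
  obtain p where p: "walk V E p" "hd p = x" "last p = y" using conn[OF assms] by blast
  have "length p = Suc (length p - 1)" using walk_nonempty[OF p(1)] by (cases p) auto
  then have "\<exists>n. \<exists>p. walk V E p \<and> hd p = x \<and> last p = y \<and> length p = Suc n" using p by blast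
  from LeastI_ex[OF this] show ?thesis unfolding gdist_def .
qed

lemma gd_le:
  assumes "walk V E p" "hd p = x" "last p = y"
  shows "d x y \<le> length p - 1"
proof -
  have "length p = Suc (length p - 1)" using walk_nonempty[OF assms(1)] by (cases p) auto
  then show ?thesis unfolding gdist_def using assms by (intro Least_le) blast
qed

lemma gd_refl[simp]: "x \<in> V \<Longrightarrow> d x x = 0"
  using gd_le[of "[x]" x x] by simp

lemma gd_0: assumes "x \<in> V" "y \<in> V" "d x y = 0" shows "x = y"
proof -
  obtain p where p: "walk V E p" "hd p = x" "last p = y" "length p = Suc 0"
    using gd_ex[OF assms(1,2)] assms(3) by auto
  then obtain a where "p = [a]" by (cases p) auto
  with p show ?thesis by simp
qed

lemma gd_sym: assumes "x \<in> V" "y \<in> V" shows "d x y = d y x"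
proof -
  have *: "d a b \<le> d b a" if a: "a \<in> V" and b: "b \<in> V" for a b
  proof -
    obtain p where p: "walk V E p" "hd p = b" "last p = a" "length p = Suc (d b a)"
      using gd_ex[OF b a] by blast
    have "walk V E (rev p)" using walk_rev[OF symE p(1)] by blast
    moreover have "p \<noteq> []" using p(4) by auto
    ultimately show ?thesis using gd_le[of "rev p" a b] p by (simp add: hd_rev last_rev)
  qed
  show ?thesis using *[OF assms] *[OF assms(2,1)] by simp
qed

lemma gd_tri: assumes "x \<in> V" "y \<in> V" "z \<in> V" shows "d x z \<le> d x y + d y z"
proof -
  obtain p where p: "walk V E p" "hd p = x" "last p = y" "length p = Suc (d x y)"
    using gd_ex[OF assms(1,2)] by blast
  obtain q where q: "walk V E q" "hd q = y" "last q = z" "length q = Suc (d y z)"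
    using gd_ex[OF assms(2,3)] by blast
  have w: "walk V E (p @ tl q)" using walk_join[OF p(1) q(1)] p q by simp
  obtain b q' where qq: "q = b # q'" using q(4) by (cases q) auto
  have "p \<noteq> []" using p(4) by auto
  then have "hd (p @ tl q) = x" "last (p @ tl q) = z" using p q qq
    by (auto simp: last_append)
  with gd_le[OF w] show ?thesis using p q by simp
qed

lemma gd_adj: "x \<in> V \<Longrightarrow> y \<in> V \<Longrightarrow> E x y \<Longrightarrow> d x y \<le> 1"
  using gd_le[of "[x,y]" x y] by simp

lemma gd_1: assumes "x \<in> V" "y \<in> V" "d x y = 1" shows "E x y"
proof -
  obtain p where p: "walk V E p" "hd p = x" "last p = y" "length p = Suc 1"
    using gd_ex[OF assms(1,2)] assms(3) by auto
  then obtain a b where "p = [a,b]" by (cases p; cases "tl p") auto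
  with p show ?thesis by simp
qed

lemma gd_nb: assumes "x \<in> V" "z \<in> V" "r \<in> V" "E x z" shows "d z r \<le> d x r + 1"
  using gd_tri[OF assms(2,1,3)] gd_adj[OF assms(2,1) symE[OF assms(1,2,4)]] by simp

lemma gd_parent:
  assumes "x \<in> V" "r \<in> V" "x \<noteq> r"
  shows "\<exists>z\<in>V. E x z \<and> Suc (d z r) = d x r"
proof -
  obtain p where p: "walk V E p" "hd p = x" "last p = r" "length p = Suc (d x r)"
    using gd_ex[OF assms(1,2)] by blast
  obtain a q where pq: "p = a # q" using p(4) by (cases p) auto
  have "q \<noteq> []" using pq p assms(3) by auto
  then obtain z q' where q: "q = z # q'" by (cases q) auto
  have w: "walk V E (z#q')" and e: "E x z" and zV: "z \<in> V" using p(1,2) pq q by (auto simp: walk_def)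
  have "d z r \<le> length (z#q') - 1" using gd_le[OF w] p(3) pq q by simp
  then have 1: "Suc (d z r) \<le> d x r" using p(4) pq q by simp
  have 2: "d x r \<le> Suc (d z r)" using gd_tri[OF assms(1) zV assms(2)] gd_adj[OF assms(1) zV e] by simp
  show ?thesis using 1 2 e zV by (intro bexI[of _ z]) auto
qed

lemma closure:
  assumes "x \<in> A" "\<And>a b. a \<in> A \<Longrightarrow> b \<in> V \<Longrightarrow> E a b \<Longrightarrow> b \<in> A" "x \<in> V" "y \<in> V"
  shows "y \<in> A"
proof -
  obtain p where p: "walk V E p" "hd p = x" "last p = y" using conn[OF assms(3,4)] by blast
  have "walk V E p \<Longrightarrow> hd p \<in> A \<Longrightarrow> last p \<in> A" for p
  proof (induction p rule: induct_list012)
    case 1 then show ?case by (simp add: walk_def)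
  next
    case (2 x) then show ?case by simp
  next
    case (3 x y zs)
    then have "y \<in> A" using assms(2) by (auto simp: walk_def)
    with 3 show ?case by auto
  qed
  with p assms(1) show ?thesis by blast
qed

definition deg where "deg x = card {y\<in>V. E x y}"

lemma shortest_distinct:
  assumes p: "walk V E p" "hd p = x" "last p = y" "length p = Suc (d x y)"
  shows "distinct p"
proof (rule ccontr)
  assume "\<not> distinct p"
  then have "\<exists>i<length p. \<exists>j<length p. i \<noteq> j \<and> p!i = p!j" by (auto simp: distinct_conv_nth)
  then obtain i0 j0 where h: "i0 < length p" "j0 < length p" "i0 \<noteq> j0" "p!i0 = p!j0" by blast
  define i where "i = min i0 j0"
  define j where "j = max i0 j0"
  have ij: "i < j" "j < length p" "p ! i = p ! j" using h unfolding i_def j_def by (auto simp: min_def max_def)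
  define q where "q = take i p @ drop j p"
  have dj: "walk V E (drop j p)" using walk_drop[OF p(1) ij(2)] .
  have hdj: "hd (drop j p) = p ! j" using ij(2) by (simp add: hd_drop_conv_nth)
  have lq: "last q = y" unfolding q_def using ij(2) p(3) by simp
  have wq: "walk V E q \<and> hd q = x"
  proof (cases i)
    case 0
    have "hd p = p ! 0" using walk_nonempty[OF p(1)] by (simp add: hd_conv_nth)
    then show ?thesis using dj hdj ij p(2) 0 unfolding q_def by simp
  next
    case (Suc i')
    have wt: "walk V E (take i p)" using walk_take[OF p(1)] Suc by simp
    have lt: "last (take i p) = p ! i'" using Suc ij by (simp add: take_Suc_conv_app_nth)
    have "Suc i' < length p" using Suc ij by simp
    then have "E (p ! i') (p ! Suc i')" using p(1) unfolding walk_def by blast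
    then have "E (p ! i') (p ! i)" using Suc by simp
    then have "walk V E q" unfolding q_def using walk_append[OF wt dj] lt hdj ij by simp
    moreover have "hd q = x" unfolding q_def using Suc ij p(2) walk_nonempty[OF p(1)]
      by (cases p) auto
    ultimately show ?thesis by simp
  qed
  have "length q < length p" unfolding q_def using ij by simp
  moreover have "d x y \<le> length q - 1" using gd_le[of q x y] wq lq by simp
  moreover have "q \<noteq> []" using wq walk_nonempty by blast
  ultimately show False using p(4) by (cases q) auto
qed

end


locale tr = cg +
  assumes irr: "\<And>x. \<not> E x x"
    and nocyc: "\<And>c. \<not> is_cycle V E c"
begin

lemma not_in_shortest:
  assumes P: "walk V E P" "hd P = z" "last P = r" "length P = Suc (d z r)"
    and le: "d z r \<le> d x r" and zx: "z \<noteq> x" and xV: "x \<in> V"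
  shows "x \<notin> set P"
proof
  assume "x \<in> set P"
  then obtain k where k: "k < length P" "P ! k = x" by (auto simp: in_set_conv_nth)
  have k0: "k \<noteq> 0"
  proof
    assume "k = 0"
    then have "hd P = x" using k walk_nonempty[OF P(1)] by (simp add: hd_conv_nth)
    then show False using P(2) zx by simp
  qed
  have w: "walk V E (drop k P)" using walk_drop[OF P(1) k(1)] .
  have "hd (drop k P) = x" using k by (simp add: hd_drop_conv_nth)
  moreover have "last (drop k P) = r" using k P(3) by simp
  ultimately have "d x r \<le> length (drop k P) - 1" using gd_le[OF w] by simp
  then show False using k0 k P(4) le by simp
qed

lemma two_parents:
  assumes xV: "x \<in> V" and rV: "r \<in> V" and z1V: "z1 \<in> V" and z2V: "z2 \<in> V"
    and e1: "E x z1" and e2: "E x z2" and ne: "z1 \<noteq> z2"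
    and l1: "d z1 r \<le> d x r" and l2: "d z2 r \<le> d x r"
  shows False
proof -
  obtain P1 where P1: "walk V E P1" "hd P1 = z1" "last P1 = r" "length P1 = Suc (d z1 r)"
    using gd_ex[OF z1V rV] by blast
  obtain P2 where P2: "walk V E P2" "hd P2 = z2" "last P2 = r" "length P2 = Suc (d z2 r)"
    using gd_ex[OF z2V rV] by blast
  have d1: "distinct P1" using shortest_distinct[OF P1] .
  have d2: "distinct P2" using shortest_distinct[OF P2] .
  have x1: "x \<notin> set P1" using not_in_shortest[OF P1 l1 _ xV] irr e1 by auto
  have x2: "x \<notin> set P2" using not_in_shortest[OF P2 l2 _ xV] irr e2 by auto
  have ne1: "P1 \<noteq> []" and ne2: "P2 \<noteq> []" using P1(4) P2(4) by auto
  define A where "A = {j. j < length P1 \<and> P1 ! j \<in> set P2}"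
  have "P1 ! (length P1 - 1) = last P1" using ne1 by (simp add: last_conv_nth)
  moreover have "last P1 \<in> set P2" using P1(3) P2(3) last_in_set[OF ne2] by simp
  ultimately have "length P1 - 1 \<in> A" unfolding A_def using ne1 by auto
  then have ex: "\<exists>j. j \<in> A" by blast
  define j where "j = (LEAST j. j \<in> A)"
  have jA: "j \<in> A" unfolding j_def using LeastI_ex[OF ex] .
  have jmin: "\<And>j'. j' \<in> A \<Longrightarrow> j \<le> j'" unfolding j_def by (rule Least_le)
  have jl: "j < length P1" and jin: "P1 ! j \<in> set P2" using jA unfolding A_def by auto
  then obtain i where il: "i < length P2" and ij: "P2 ! i = P1 ! j" by (auto simp: in_set_conv_nth)
  define T1 where "T1 = take (Suc j) P1"
  define T2 where "T2 = take i P2"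
  define c where "c = x # T1 @ rev T2"
  have hT1: "hd T1 = z1" unfolding T1_def using ne1 P1(2) by (cases P1) auto
  have lT1: "last T1 = P1 ! j" unfolding T1_def using jl by (simp add: take_Suc_conv_app_nth)
  have wT1: "walk V E T1" unfolding T1_def using walk_take[OF P1(1)] by simp
  have w1: "walk V E (x # T1)"
  proof -
    obtain a t where "T1 = a # t" using wT1 walk_nonempty by (cases T1) auto
    then show ?thesis using wT1 hT1 e1 xV by auto
  qed
  have lxT1: "last (x # T1) = P1 ! j" using lT1 wT1 walk_nonempty by fastforce
  have wc: "walk V E c"
  proof (cases i)
    case 0 then show ?thesis unfolding c_def T2_def using w1 by simp
  next
    case (Suc i')
    have wT2: "walk V E (rev T2)" unfolding T2_def using walk_rev[OF symE walk_take[OF P2(1)]] Suc by simp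
    have "Suc i' < length P2" using Suc il by simp
    then have "E (P2 ! i') (P2 ! Suc i')" using P2(1) unfolding walk_def by blast
    then have "E (P2 ! i) (P2 ! i')" using symE walk_set[OF P2(1)] Suc il
      by (metis nth_mem subsetD Suc_lessD)
    moreover have "hd (rev T2) = P2 ! i'" unfolding T2_def using Suc il
      by (simp add: hd_rev take_Suc_conv_app_nth)
    ultimately have "E (last (x # T1)) (hd (rev T2))" using lxT1 ij by simp
    from walk_append[OF w1 wT2 this] show ?thesis unfolding c_def by simp
  qed
  have lenc: "length c = Suc (Suc j + i)" unfolding c_def T1_def T2_def using jl il by simp
  have ji: "j \<noteq> 0 \<or> i \<noteq> 0"
  proof (rule ccontr)
    assume "\<not> (j \<noteq> 0 \<or> i \<noteq> 0)"
    then have "P1 ! 0 = P2 ! 0" using ij by simp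
    then show False using ne P1(2) P2(2) ne1 ne2 by (simp add: hd_conv_nth)
  qed
  have lc: "last c = z2"
  proof (cases i)
    case 0 then show ?thesis unfolding c_def T2_def using lxT1 ij P2(2) ne2 by (simp add: hd_conv_nth)
  next
    case (Suc i')
    then have "T2 \<noteq> []" unfolding T2_def using ne2 by simp
    then show ?thesis unfolding c_def using P2(2) ne2 Suc unfolding T2_def
      by (simp add: last_rev)
  qed
  have dT1: "distinct T1" unfolding T1_def using d1 by simp
  have dT2: "distinct T2" unfolding T2_def using d2 by simp
  have xT: "x \<notin> set T1" "x \<notin> set T2" unfolding T1_def T2_def using x1 x2
    by (auto dest: in_set_takeD)
  have disj: "set T1 \<inter> set T2 = {}"
  proof (rule ccontr)
    assume "set T1 \<inter> set T2 \<noteq> {}"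
    then obtain a where a1: "a \<in> set T1" and a2: "a \<in> set T2" by blast
    from a1 obtain j' where j': "j' < length T1" "T1 ! j' = a" by (auto simp: in_set_conv_nth)
    have j'le: "j' \<le> j" "j' < length P1" and aj: "P1 ! j' = a" using j' jl unfolding T1_def by auto
    have "a \<in> set P2" using a2 unfolding T2_def by (auto dest: in_set_takeD)
    then have "j' \<in> A" unfolding A_def using j'le aj by auto
    then have "j' = j" using jmin j'le by fastforce
    from a2 obtain i' where i': "i' < length T2" "T2 ! i' = a" by (auto simp: in_set_conv_nth)
    then have "i' < i" "P2 ! i' = a" unfolding T2_def using il by auto
    moreover have "P2 ! i = a" using ij aj \<open>j' = j\<close> by simp
    ultimately show False using nth_eq_iff_index_eq[OF d2, of i' i] il by simp
  qed
  have dc: "distinct c" unfolding c_def using dT1 dT2 xT disj by auto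
  have "E (last c) (hd c)" using lc symE[OF xV z2V e2] unfolding c_def by simp
  then have "is_cycle V E c" unfolding is_cycle_def using wc lenc ji dc by auto
  then show False using nocyc by blast
qed

end


context cg
begin

lemma aut_bij: "automorphism V E f \<Longrightarrow> bij_betw f V V" by (simp add: automorphism_def)
lemma aut_in: "automorphism V E f \<Longrightarrow> x \<in> V \<Longrightarrow> f x \<in> V"
  by (auto simp: automorphism_def bij_betw_def)
lemma aut_inj: "automorphism V E f \<Longrightarrow> inj_on f V"
  by (auto simp: automorphism_def bij_betw_def)
lemma aut_E: "automorphism V E f \<Longrightarrow> x \<in> V \<Longrightarrow> y \<in> V \<Longrightarrow> E (f x) (f y) \<longleftrightarrow> E x y"
  by (auto simp: automorphism_def)
lemma aut_gd: "automorphism V E f \<Longrightarrow> x \<in> V \<Longrightarrow> y \<in> V \<Longrightarrow> d (f x) (f y) = d x y"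
  using gdist_isom[of V E V E f x y] by (simp add: automorphism_isom)

lemma aut_deg:
  assumes f: "automorphism V E f" and x: "x \<in> V"
  shows "deg (f x) = deg x"
proof -
  have "{y\<in>V. E (f x) y} = f ` {y\<in>V. E x y}"
  proof
    show "f ` {y \<in> V. E x y} \<subseteq> {y \<in> V. E (f x) y}" using aut_in[OF f] aut_E[OF f] x by auto
    show "{y \<in> V. E (f x) y} \<subseteq> f ` {y \<in> V. E x y}"
    proof
      fix y' assume y': "y' \<in> {y \<in> V. E (f x) y}"
      then obtain y where y: "y \<in> V" "y' = f y" using aut_bij[OF f] by (auto simp: bij_betw_def)
      then show "y' \<in> f ` {y \<in> V. E x y}" using y' aut_E[OF f x y(1)] by auto
    qed
  qed
  moreover have "inj_on f {y\<in>V. E x y}" using aut_inj[OF f] by (rule inj_on_subset) auto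
  ultimately show ?thesis unfolding deg_def by (simp add: card_image)
qed

lemma aut_fix:
  assumes S: "resolving V E S" and f: "automorphism V E f" and fx0: "\<forall>s\<in>S. f s = s"
  shows "\<forall>x\<in>V. f x = x"
proof (rule ballI, rule ccontr)
  fix x assume x: "x \<in> V" and ne: "f x \<noteq> x"
  have fx: "f x \<in> V" using aut_in[OF f x] .
  obtain s where s: "s \<in> S" "d (f x) s \<noteq> d x s" using S fx x ne unfolding resolving_def by blast
  have "s \<in> V" using S s unfolding resolving_def by auto
  then have "d (f x) (f s) = d x s" using aut_gd[OF f x] by simp
  then show False using s fx0 by simp
qed

lemma color_crit:
  assumes S: "resolving V E S" and c: "c ` V \<subseteq> {..<k}"
    and h: "\<And>f. automorphism V E f \<Longrightarrow> (\<forall>x\<in>V. c (f x) = c x) \<Longrightarrow> \<forall>s\<in>S. f s = s"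
  shows "distinguishing_number V E \<le> k"
proof -
  have "distinguishing_coloring V E k c"
    unfolding distinguishing_coloring_def
  proof (intro conjI allI impI)
    show "c ` V \<subseteq> {..<k}" using c .
    fix f assume "automorphism V E f \<and> (\<forall>x\<in>V. c (f x) = c x)"
    then show "\<forall>x\<in>V. f x = x" using aut_fix[OF S] h by blast
  qed
  then have "\<exists>c. distinguishing_coloring V E k c" by blast
  then show ?thesis unfolding distinguishing_number_def by (rule Least_le)
qed

lemma idx_ex:
  assumes "finite A"
  shows "\<exists>idx. inj_on idx A \<and> (\<forall>v\<in>A. idx v < card A)"
proof -
  obtain h where "bij_betw h A {0..<card A}" using ex_bij_betw_finite_nat[OF assms] by blast
  then show ?thesis by (intro exI[of _ h]) (auto simp: bij_betw_def)
qed

lemma res_sub: "resolving V E S \<Longrightarrow> S \<subseteq> V" by (simp add: resolving_def)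
lemma res_fin: "resolving V E S \<Longrightarrow> finite S" using res_sub finV finite_subset by blast

lemma schemeA:
  assumes S: "resolving V E S" and k: "card S = k" and s0: "s0 \<in> S"
    and no: "\<And>f. automorphism V E f \<Longrightarrow> f s0 \<in> S"
  shows "distinguishing_number V E \<le> k"
proof -
  let ?S' = "S - {s0}"
  have fS: "finite ?S'" using res_fin[OF S] by simp
  have cS: "card ?S' = k - 1" using k s0 res_fin[OF S] by simp
  obtain idx where idx: "inj_on idx ?S'" "\<forall>v\<in>?S'. idx v < k - 1" using idx_ex[OF fS] cS by auto
  have rng: "\<And>v. v \<in> ?S' \<Longrightarrow> Suc (idx v) < k"
  proof -
    fix v assume "v \<in> ?S'"
    then have "idx v < k - 1" using idx(2) by blast
    then show "Suc (idx v) < k" by simp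
  qed
  have ieq: "\<And>v w. v \<in> ?S' \<Longrightarrow> w \<in> ?S' \<Longrightarrow> idx v = idx w \<Longrightarrow> v = w" using idx(1) by (simp add: inj_on_eq_iff)
  define c where "c v = (if v \<in> ?S' then Suc (idx v) else 0)" for v
  have "card S \<noteq> 0" using s0 res_fin[OF S] by (auto simp: card_0_eq)
  then have k1: "k \<ge> 1" using k by simp
  show ?thesis
  proof (rule color_crit[OF S, of c])
    show "c ` V \<subseteq> {..<k}" using rng k1 unfolding c_def by auto
  next
    fix f assume f: "automorphism V E f" and pc: "\<forall>x\<in>V. c (f x) = c x"
    have SV: "S \<subseteq> V" using res_sub[OF S] .
    have 1: "f v = v" if v: "v \<in> ?S'" for v
    proof -
      have "c (f v) = Suc (idx v)"
      proof -
        have "c (f v) = c v" using pc v SV by blast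
        also have "c v = Suc (idx v)" using v by (simp add: c_def)
        finally show ?thesis .
      qed
      then have "f v \<in> ?S'" "idx (f v) = idx v" unfolding c_def by (auto split: if_splits)
      then show ?thesis using ieq v by blast
    qed
    have "f s0 \<in> S" using no[OF f] .
    moreover have "c (f s0) = 0"
    proof -
      have "c (f s0) = c s0" using pc s0 SV by blast
      also have "c s0 = 0" by (simp add: c_def)
      finally show ?thesis .
    qed
    ultimately have "f s0 = s0" unfolding c_def by (auto split: if_splits)
    with 1 show "\<forall>s\<in>S. f s = s" by blast
  qed
qed

lemma schemeB:
  assumes S: "resolving V E S" and k: "card S = k" and s0: "s0 \<in> S" and s1: "s1 \<in> S"
    and ne: "s0 \<noteq> s1" and dg: "deg s0 \<noteq> deg s1"
  shows "distinguishing_number V E \<le> k"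
proof -
  let ?S' = "S - {s0}"
  have fS: "finite ?S'" using res_fin[OF S] by simp
  have cS: "card ?S' = k - 1" using k s0 res_fin[OF S] by simp
  obtain idx where idx: "inj_on idx ?S'" "\<forall>v\<in>?S'. idx v < k - 1" using idx_ex[OF fS] cS by auto
  have rng: "\<And>v. v \<in> ?S' \<Longrightarrow> Suc (idx v) < k"
  proof -
    fix v assume "v \<in> ?S'"
    then have "idx v < k - 1" using idx(2) by blast
    then show "Suc (idx v) < k" by simp
  qed
  have ieq: "\<And>v w. v \<in> ?S' \<Longrightarrow> w \<in> ?S' \<Longrightarrow> idx v = idx w \<Longrightarrow> v = w" using idx(1) by (simp add: inj_on_eq_iff)
  have s1': "s1 \<in> ?S'" using s1 ne by auto
  define c where "c v = (if v \<in> ?S' then Suc (idx v) else if v = s0 then Suc (idx s1) else 0)" for v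
  have "card S \<noteq> 0" using s0 res_fin[OF S] by (auto simp: card_0_eq)
  then have k1: "k \<ge> 1" using k by simp
  show ?thesis
  proof (rule color_crit[OF S, of c])
    show "c ` V \<subseteq> {..<k}" using rng[OF s1'] rng k1 unfolding c_def by auto
  next
    fix f assume f: "automorphism V E f" and pc: "\<forall>x\<in>V. c (f x) = c x"
    have SV: "S \<subseteq> V" using res_sub[OF S] .
    have 1: "(f v \<in> ?S' \<and> idx (f v) = idx v) \<or> (f v = s0 \<and> idx v = idx s1)" if v: "v \<in> ?S'" for v
    proof -
      have "c (f v) = Suc (idx v)"
      proof -
        have "c (f v) = c v" using pc v SV by blast
        also have "c v = Suc (idx v)" using v by (simp add: c_def)
        finally show ?thesis .
      qed
      then show ?thesis unfolding c_def by (auto split: if_splits)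
    qed
    have 2: "f v = v" if v: "v \<in> ?S'" "v \<noteq> s1" for v
      using 1[OF v(1)] ieq v s1' by blast
    have "f s1 \<noteq> s0" using aut_deg[OF f] SV s1 dg by auto
    then have 3: "f s1 = s1" using 1[OF s1'] ieq s1' by blast
    have "c (f s0) = Suc (idx s1)"
    proof -
      have "c (f s0) = c s0" using pc s0 SV by blast
      also have "c s0 = Suc (idx s1)" by (simp add: c_def)
      finally show ?thesis .
    qed
    then have "(f s0 \<in> ?S' \<and> idx (f s0) = idx s1) \<or> f s0 = s0" unfolding c_def by (auto split: if_splits)
    then have "f s0 = s1 \<or> f s0 = s0" using ieq s1' by blast
    moreover have "f s0 \<noteq> f s1" using aut_inj[OF f] s0 s1 SV ne by (simp add: inj_on_eq_iff subsetD)
    ultimately have "f s0 = s0" using 3 by auto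
    with 2 3 show "\<forall>s\<in>S. f s = s" by blast
  qed
qed

lemma schemeC:
  assumes S: "resolving V E S" and k: "card S = k" and s0: "s0 \<in> S" and s1: "s1 \<in> S"
    and ne: "s0 \<noteq> s1" and u: "u \<in> V" "u \<notin> S" and dg0: "deg u \<noteq> deg s0" and dg1: "deg u \<noteq> deg s1"
    and dd: "d u s0 \<noteq> d u s1"
  shows "distinguishing_number V E \<le> k"
proof -
  let ?S' = "S - {s0}"
  have fS: "finite ?S'" using res_fin[OF S] by simp
  have cS: "card ?S' = k - 1" using k s0 res_fin[OF S] by simp
  obtain idx where idx: "inj_on idx ?S'" "\<forall>v\<in>?S'. idx v < k - 1" using idx_ex[OF fS] cS by auto
  have rng: "\<And>v. v \<in> ?S' \<Longrightarrow> Suc (idx v) < k"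
  proof -
    fix v assume "v \<in> ?S'"
    then have "idx v < k - 1" using idx(2) by blast
    then show "Suc (idx v) < k" by simp
  qed
  have ieq: "\<And>v w. v \<in> ?S' \<Longrightarrow> w \<in> ?S' \<Longrightarrow> idx v = idx w \<Longrightarrow> v = w" using idx(1) by (simp add: inj_on_eq_iff)
  have s1': "s1 \<in> ?S'" using s1 ne by auto
  define c where "c v = (if v \<in> ?S' then Suc (idx v) else if v = s0 \<or> v = u then Suc (idx s1) else 0)" for v
  have "card S \<noteq> 0" using s0 res_fin[OF S] by (auto simp: card_0_eq)
  then have k1: "k \<ge> 1" using k by simp
  show ?thesis
  proof (rule color_crit[OF S, of c])
    show "c ` V \<subseteq> {..<k}" using rng[OF s1'] rng k1 unfolding c_def by auto
  next
    fix f assume f: "automorphism V E f" and pc: "\<forall>x\<in>V. c (f x) = c x"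
    have SV: "S \<subseteq> V" using res_sub[OF S] .
    have 1: "(f v \<in> ?S' \<and> idx (f v) = idx v) \<or> ((f v = s0 \<or> f v = u) \<and> idx v = idx s1)" if v: "v \<in> ?S'" for v
    proof -
      have "c (f v) = Suc (idx v)"
      proof -
        have "c (f v) = c v" using pc v SV by blast
        also have "c v = Suc (idx v)" using v by (simp add: c_def)
        finally show ?thesis .
      qed
      then show ?thesis unfolding c_def by (auto split: if_splits)
    qed
    have 2: "f v = v" if v: "v \<in> ?S'" "v \<noteq> s1" for v
      using 1[OF v(1)] ieq v s1' by blast
    have "c (f u) = Suc (idx s1)"
    proof -
      have "c (f u) = c u" using pc u by blast
      also have "c u = Suc (idx s1)" using u by (simp add: c_def)
      finally show ?thesis .
    qed
    then have "(f u \<in> ?S' \<and> idx (f u) = idx s1) \<or> f u = s0 \<or> f u = u" unfolding c_def by (auto split: if_splits)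
    then have "f u = s1 \<or> f u = s0 \<or> f u = u" using ieq s1' by blast
    moreover have "deg (f u) = deg u" using aut_deg[OF f u(1)] .
    ultimately have fu: "f u = u" using dg0 dg1 by auto
    have "f s1 \<noteq> u"
    proof
      assume "f s1 = u"
      then have "f s1 = f u" using fu by simp
      moreover have "s1 \<in> V" using s1 SV by blast
      ultimately have "s1 = u" using inj_onD[OF aut_inj[OF f]] u(1) by blast
      then show False using u s1 by simp
    qed
    moreover have "f s1 \<noteq> s0"
    proof
      assume "f s1 = s0"
      then have "d u s0 = d u s1" using aut_gd[OF f u(1), of s1] fu s1 SV by auto
      then show False using dd by simp
    qed
    ultimately have 3: "f s1 = s1" using 1[OF s1'] ieq s1' by blast
    have "c (f s0) = Suc (idx s1)"
    proof -
      have "c (f s0) = c s0" using pc s0 SV by blast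
      also have "c s0 = Suc (idx s1)" by (simp add: c_def)
      finally show ?thesis .
    qed
    then have "(f s0 \<in> ?S' \<and> idx (f s0) = idx s1) \<or> f s0 = s0 \<or> f s0 = u" unfolding c_def by (auto split: if_splits)
    then have "f s0 = s1 \<or> f s0 = s0 \<or> f s0 = u" using ieq s1' by blast
    moreover have "f s0 \<noteq> f s1" using aut_inj[OF f] s0 s1 SV ne by (simp add: inj_on_eq_iff subsetD)
    moreover have "f s0 \<noteq> f u"
    proof -
      have "s0 \<noteq> u" "s0 \<in> V" using s0 u SV by auto
      then show ?thesis using inj_on_eq_iff[OF aut_inj[OF f]] u(1) by blast
    qed
    ultimately have "f s0 = s0" using 3 fu by auto
    with 2 3 show "\<forall>s\<in>S. f s = s" by blast
  qed
qed

end


context cg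
begin

lemma nb_fin: "finite {y\<in>V. E x y}" using finV by simp

lemma deg1:
  assumes "deg x = 1"
  shows "\<exists>u\<in>V. E x u \<and> (\<forall>w\<in>V. E x w \<longrightarrow> w = u)"
proof -
  obtain u where "{y\<in>V. E x y} = {u}" using assms unfolding deg_def by (rule card_1_singletonE)
  then show ?thesis by (intro bexI[of _ u]) auto
qed

lemma deg1':
  assumes "deg x = 1" "E x u" "u \<in> V"
  shows "\<forall>w\<in>V. E x w \<longrightarrow> w = u"
  using deg1[OF assms(1)] assms(2,3) by blast

lemma deg_single: "{y\<in>V. E x y} = {u} \<Longrightarrow> deg x = 1"
  unfolding deg_def by simp

end

context tr
begin

lemma star_iso:
  assumes cV: "c \<in> V" and h: "\<forall>v\<in>V. v \<noteq> c \<longrightarrow> E c v \<and> (\<forall>w\<in>V. E v w \<longrightarrow> w = c)"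
    and cardV: "card V = Suc m"
  shows "graph_iso V E (star_V m) star_E"
proof -
  have fin: "finite (V - {c})" using finV by simp
  have cm: "card (V - {c}) = m" using cardV cV finV by simp
  obtain g where g: "bij_betw g (V - {c}) {0..<m}" using ex_bij_betw_finite_nat[OF fin] cm by auto
  define phi where "phi v = (if v = c then 0 else Suc (g v))" for v
  have inj: "inj_on phi V"
  proof (rule inj_onI)
    fix x y assume x: "x \<in> V" and y: "y \<in> V" and e: "phi x = phi y"
    show "x = y"
    proof (cases "x = c")
      case True then show ?thesis using e unfolding phi_def by (auto split: if_splits)
    next
      case False
      then have "y \<noteq> c" using e unfolding phi_def by (auto split: if_splits)
      then have "g x = g y" using e False unfolding phi_def by simp
      moreover have "inj_on g (V - {c})" using g unfolding bij_betw_def by blast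
      ultimately show ?thesis using inj_onD[of g "V - {c}" x y] x y False \<open>y \<noteq> c\<close> by blast
    qed
  qed
  have img: "phi ` V = {0..m}"
  proof
    show "phi ` V \<subseteq> {0..m}"
    proof
      fix a assume "a \<in> phi ` V"
      then obtain v where v: "v \<in> V" "a = phi v" by blast
      show "a \<in> {0..m}"
      proof (cases "v = c")
        case True then show ?thesis using v unfolding phi_def by simp
      next
        case False
        then have "g v \<in> {0..<m}" using g v unfolding bij_betw_def by auto
        then show ?thesis using v False unfolding phi_def by simp
      qed
    qed
    show "{0..m} \<subseteq> phi ` V"
    proof
      fix a assume a: "a \<in> {0..m}"
      show "a \<in> phi ` V"
      proof (cases a)
        case 0 then show ?thesis using cV unfolding phi_def by (intro image_eqI[of _ _ c]) auto
      next
        case (Suc b)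
        then have "b \<in> {0..<m}" using a by simp
        then have "b \<in> g ` (V - {c})" using g unfolding bij_betw_def by auto
        then obtain v where v: "v \<in> V - {c}" "g v = b" by blast
        then show ?thesis using Suc unfolding phi_def by (intro image_eqI[of _ _ v]) auto
      qed
    qed
  qed
  have edges: "E x y \<longleftrightarrow> star_E (phi x) (phi y)" if x: "x \<in> V" and y: "y \<in> V" for x y
  proof -
    have p0: "\<And>v. phi v = 0 \<longleftrightarrow> v = c" unfolding phi_def by simp
    have "E x y \<longleftrightarrow> (x = c \<and> y \<noteq> c) \<or> (y = c \<and> x \<noteq> c)"
    proof (cases "x = c")
      case True
      show ?thesis
      proof (cases "y = c")
        case True then show ?thesis using \<open>x = c\<close> irr by simp
      next
        case False then have "E c y" using h y by blast
        then show ?thesis using \<open>x = c\<close> False by simp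
      qed
    next
      case False
      then have ex: "E c x" "\<forall>w\<in>V. E x w \<longrightarrow> w = c" using h x by auto
      show ?thesis
      proof (cases "y = c")
        case True then show ?thesis using False symE[OF cV x ex(1)] by simp
      next
        case False
        then show ?thesis using ex(2) y \<open>x \<noteq> c\<close> by auto
      qed
    qed
    then show ?thesis unfolding star_E_def by (simp add: p0)
  qed
  show ?thesis unfolding graph_iso_def star_V_def
    using inj img edges by (intro exI[of _ phi]) (auto simp: bij_betw_def)
qed

lemma path_of_single:
  assumes S: "resolving V E {s}" and c2: "card V \<ge> 2"
  shows "graph_iso V E (path_V (card V)) path_E"
proof -
  have sV: "s \<in> V" using S unfolding resolving_def by auto
  define g where "g v = d v s" for v
  have inj: "inj_on g V"
  proof (rule inj_onI, rule ccontr)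
    fix x y assume "x \<in> V" "y \<in> V" "g x = g y" "x \<noteq> y"
    then show False using S unfolding resolving_def g_def by auto
  qed
  have down: "\<forall>v\<in>V. d v s = n \<longrightarrow> (\<forall>b\<le>n. b \<in> g ` V)" for n
  proof (induction n)
    case 0 then show ?case unfolding g_def by auto
  next
    case (Suc n)
    show ?case
    proof (intro ballI impI allI)
      fix v b assume v: "v \<in> V" and dv: "d v s = Suc n" and b: "b \<le> Suc n"
      have "v \<noteq> s" using dv sV by auto
      then obtain z where z: "z \<in> V" "E v z" "Suc (d z s) = d v s" using gd_parent[OF v sV] by blast
      show "b \<in> g ` V"
      proof (cases "b = Suc n")
        case True then show ?thesis using v dv unfolding g_def by (intro image_eqI[of _ _ v]) auto
      next
        case False then show ?thesis using Suc.IH z dv b by auto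
      qed
    qed
  qed
  have img: "g ` V = {..<card V}"
  proof (rule card_subset_eq)
    show "finite {..<card V}" by simp
    show "g ` V \<subseteq> {..<card V}"
    proof
      fix a assume "a \<in> g ` V"
      then obtain v where v: "v \<in> V" "a = g v" by blast
      have "{..a} \<subseteq> g ` V" using down[of "d v s"] v unfolding g_def by auto
      then have "card {..a} \<le> card (g ` V)" using finV by (intro card_mono) auto
      then have "Suc a \<le> card V" using card_image[OF inj] by simp
      then show "a \<in> {..<card V}" by simp
    qed
    show "card (g ` V) = card {..<card V}" using card_image[OF inj] by simp
  qed
  have edges: "E x y \<longleftrightarrow> path_E (g x) (g y)" if x: "x \<in> V" and y: "y \<in> V" for x y
  proof
    assume e: "E x y"
    have "x \<noteq> y" using e irr by auto
    then have "g x \<noteq> g y" using inj_onD[OF inj _ x y] by blast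
    moreover have "g y \<le> g x + 1" "g x \<le> g y + 1" unfolding g_def
      using gd_nb[OF x y sV e] gd_nb[OF y x sV symE[OF x y e]] by auto
    ultimately show "path_E (g x) (g y)" unfolding path_E_def by auto
  next
    assume "path_E (g x) (g y)"
    then have "g x = Suc (g y) \<or> g y = Suc (g x)" unfolding path_E_def by auto
    then show "E x y"
    proof
      assume h: "g x = Suc (g y)"
      then have "x \<noteq> s" using sV unfolding g_def by auto
      then obtain z where z: "z \<in> V" "E x z" "Suc (d z s) = d x s" using gd_parent[OF x sV] by blast
      then have "g z = g y" using h unfolding g_def by simp
      then have "z = y" using inj_onD[OF inj _ z(1) y] by blast
      then show "E x y" using z by simp
    next
      assume h: "g y = Suc (g x)"
      then have "y \<noteq> s" using sV unfolding g_def by auto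
      then obtain z where z: "z \<in> V" "E y z" "Suc (d z s) = d y s" using gd_parent[OF y sV] by blast
      then have "g z = g x" using h unfolding g_def by simp
      then have "z = x" using inj_onD[OF inj _ z(1) x] by blast
      then show "E x y" using z symE y x by blast
    qed
  qed
  show ?thesis unfolding graph_iso_def path_V_def
    using inj img edges by (intro exI[of _ g]) (auto simp: bij_betw_def)
qed

end


context tr
begin

lemma deltaNot1:
  assumes sV: "s \<in> V" and s'V: "s' \<in> V" and ne: "s \<noteq> s'" and dg: "deg s \<noteq> 1"
    and prp: "\<And>u. u \<in> V \<Longrightarrow> deg u = 1 \<Longrightarrow> d u s = d u s'"
  shows False
proof -
  define m where "m = d s s'"
  obtain b where b: "b \<in> V" "E s b" "Suc (d b s') = d s s'" using gd_parent[OF sV s'V ne] by blast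
  have bN: "b \<in> {y\<in>V. E s y}" using b by simp
  have "deg s \<noteq> 0" unfolding deg_def using bN nb_fin by (auto simp: card_0_eq)
  then have dg2: "card {y\<in>V. E s y} \<ge> 2" using dg unfolding deg_def by simp
  have "\<exists>y\<in>{y\<in>V. E s y}. y \<noteq> b"
  proof (rule ccontr)
    assume "\<not> (\<exists>y\<in>{y\<in>V. E s y}. y \<noteq> b)"
    then have "{y\<in>V. E s y} \<subseteq> {b}" by blast
    then have "card {y\<in>V. E s y} \<le> 1" using card_mono[of "{b}"] by fastforce
    then show False using dg2 by simp
  qed
  then obtain y where yV: "y \<in> V" and ey: "E s y" and yb: "y \<noteq> b" by blast
  have dy1: "\<not> d y s' \<le> d s s'"
  proof
    assume "d y s' \<le> d s s'"
    then show False using two_parents[OF sV s'V b(1) yV b(2) ey] yb b(3) by simp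
  qed
  have dy: "d y s' = d s s' + 1" using gd_nb[OF sV yV s'V ey] dy1 by simp
  have "y \<noteq> s" using ey irr by auto
  then have ys: "d y s = 1" using gd_adj[OF yV sV symE[OF sV yV ey]] gd_0[OF yV sV] by fastforce
  define Y where "Y = {v\<in>V. d v s' = d v s + m}"
  have yY: "y \<in> Y" unfolding Y_def m_def using yV dy ys by simp
  have finY: "finite Y" unfolding Y_def using finV by simp
  define M where "M = Max ((\<lambda>v. d v s') ` Y)"
  have "M \<in> (\<lambda>v. d v s') ` Y" unfolding M_def using finY yY by (intro Max_in) auto
  then obtain x where xY: "x \<in> Y" and dx: "d x s' = M" by auto
  have xmax: "\<And>v. v \<in> Y \<Longrightarrow> d v s' \<le> d x s'" using dx finY unfolding M_def by auto
  have xV: "x \<in> V" and xeq: "d x s' = d x s + m" using xY unfolding Y_def by auto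
  have "d y s' \<le> d x s'" using xmax[OF yY] .
  then have "x \<noteq> s'" using dy s'V by auto
  then obtain p where p: "p \<in> V" "E x p" "Suc (d p s') = d x s'" using gd_parent[OF xV s'V] by blast
  have N: "\<forall>z\<in>V. E x z \<longrightarrow> z = p"
  proof (intro ballI impI, rule ccontr)
    fix z assume zV: "z \<in> V" and ez: "E x z" and zp: "z \<noteq> p"
    have 1: "\<not> d z s' \<le> d x s'"
    proof
      assume "d z s' \<le> d x s'"
      then show False using two_parents[OF xV s'V p(1) zV p(2) ez] zp p(3) by simp
    qed
    have 2: "d z s' \<le> d x s' + 1" using gd_nb[OF xV zV s'V ez] .
    have 3: "d z s \<le> d x s + 1" using gd_nb[OF xV zV sV ez] .
    have 4: "d z s' \<le> d z s + m" using gd_tri[OF zV sV s'V] unfolding m_def .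
    have "z \<in> Y" unfolding Y_def using zV 1 2 3 4 xeq by simp
    then show False using xmax 1 by blast
  qed
  have "{w\<in>V. E x w} = {p}"
  proof
    show "{w \<in> V. E x w} \<subseteq> {p}" using N by blast
    show "{p} \<subseteq> {w \<in> V. E x w}" using p by blast
  qed
  then have "deg x = 1" by (rule deg_single)
  then have "d x s = d x s'" using prp xV by blast
  moreover have "m \<noteq> 0" unfolding m_def using gd_0[OF sV s'V] ne by auto
  ultimately show False using xeq by simp
qed


lemma deltaOne:
  assumes S: "resolving V E S" and c2: "card S \<ge> 2" and degS: "\<forall>a\<in>S. deg a = 1"
    and noC: "\<And>u a b. u \<in> V \<Longrightarrow> u \<notin> S \<Longrightarrow> deg u \<noteq> 1 \<Longrightarrow> a \<in> S \<Longrightarrow> b \<in> S \<Longrightarrow> d u a = d u b"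
    and s0: "s0 \<in> S" and f: "automorphism V E f" and tS: "f s0 \<notin> S"
  shows "\<exists>c\<in>V. (\<forall>v\<in>V. v \<noteq> c \<longrightarrow> E c v \<and> (\<forall>w\<in>V. E v w \<longrightarrow> w = c)) \<and> card V \<ge> 3"
proof -
  have SV: "S \<subseteq> V" using res_sub[OF S] .
  have finS: "finite S" using res_fin[OF S] .
  have s0V: "s0 \<in> V" using s0 SV by blast
  obtain u where uV: "u \<in> V" and su: "E s0 u" and sleaf: "\<forall>w\<in>V. E s0 w \<longrightarrow> w = u"
    using deg1[of s0] degS s0 by blast
  define t where "t = f s0"
  have tV: "t \<in> V" unfolding t_def using aut_in[OF f s0V] .
  have degt: "deg t = 1" unfolding t_def using aut_deg[OF f s0V] degS s0 by simp
  have tS': "t \<notin> S" unfolding t_def using tS .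
  have us: "E u s0" using symE[OF s0V uV su] .
  have du1: "deg u \<noteq> 1"
  proof
    assume "deg u = 1"
    then have uleaf: "\<forall>w\<in>V. E u w \<longrightarrow> w = s0" using deg1'[OF _ us s0V] by blast
    have all: "\<forall>y\<in>V. y \<in> {s0, u}"
    proof
      fix y assume yV: "y \<in> V"
      show "y \<in> {s0, u}"
      proof (rule closure[of s0 "{s0,u}" y])
        show "s0 \<in> {s0, u}" by simp
        show "s0 \<in> V" using s0V .
        show "y \<in> V" using yV .
        fix a b assume "a \<in> {s0, u}" "b \<in> V" "E a b"
        then show "b \<in> {s0, u}" using sleaf uleaf by blast
      qed
    qed
    have "t \<noteq> s0" using tS' s0 by blast
    then have "t = u" using all tV by blast
    then have "u \<notin> S" using tS' by simp
    then have "S \<subseteq> {s0}" using all SV by blast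
    then have "card S \<le> 1" using card_mono[of "{s0}" S] by simp
    then show False using c2 by simp
  qed
  have uS: "u \<notin> S" using du1 degS by blast
  have us1: "d u s0 = 1"
  proof -
    have "u \<noteq> s0" using us irr by blast
    then have "d u s0 \<noteq> 0" using gd_0[OF uV s0V] by blast
    moreover have "d u s0 \<le> 1" using gd_adj[OF uV s0V us] .
    ultimately show ?thesis by simp
  qed
  have Su: "\<forall>a\<in>S. E u a"
  proof
    fix a assume a: "a \<in> S"
    have "d u a = d u s0" using noC[OF uV uS du1 a s0] .
    then have "d u a = 1" using us1 by simp
    then show "E u a" using gd_1[OF uV] a SV by blast
  qed
  have leaf: "\<forall>a\<in>S. \<forall>w\<in>V. E a w \<longrightarrow> w = u"
  proof (intro ballI)
    fix a w assume a: "a \<in> S" and wV: "w \<in> V"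
    have aV: "a \<in> V" using a SV by blast
    have "E a u" using symE[OF uV aV] Su a by blast
    then have "\<forall>w\<in>V. E a w \<longrightarrow> w = u" using deg1'[of a u] degS a uV by blast
    then show "E a w \<longrightarrow> w = u" using wV by blast
  qed
  have dist: "d v a = Suc (d v u)" if vV: "v \<in> V" and a: "a \<in> S" and va: "v \<noteq> a" for v a
  proof -
    have aV: "a \<in> V" using a SV by blast
    have "d u a \<le> 1" using gd_adj[OF uV aV] Su a by blast
    then have 1: "d v a \<le> Suc (d v u)" using gd_tri[OF vV uV aV] by simp
    have "a \<noteq> v" using va by simp
    then obtain z where z: "z \<in> V" "E a z" "Suc (d z v) = d a v" using gd_parent[OF aV vV] by blast
    then have "z = u" using leaf a by blast
    then have "d v a = Suc (d v u)" using z gd_sym[OF vV aV] gd_sym[OF vV uV] by simp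
    then show ?thesis .
  qed
  have injV: "v = w" if h1: "v \<in> V" and h2: "w \<in> V" and h3: "v \<notin> S" and h4: "w \<notin> S" and h5: "d v u = d w u" for v w
  proof (rule ccontr)
    assume "v \<noteq> w"
    then obtain a where a: "a \<in> S" "d v a \<noteq> d w a" using S h1 h2 unfolding resolving_def by blast
    have "v \<noteq> a" "w \<noteq> a" using h3 h4 a(1) by auto
    then have "d v a = d w a" using dist[OF h1 a(1)] dist[OF h2 a(1)] h5 by simp
    then show False using a(2) by simp
  qed
  define w' where "w' = f u"
  have w'V: "w' \<in> V" unfolding w'_def using aut_in[OF f uV] .
  have tw: "E t w'" unfolding t_def w'_def using aut_E[OF f s0V uV] su by simp
  have degw: "deg w' = deg u" unfolding w'_def using aut_deg[OF f uV] .
  have w'u: "w' = u"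
  proof (rule ccontr)
    assume wu: "w' \<noteq> u"
    have w'S: "w' \<notin> S"
    proof
      assume "w' \<in> S"
      then have "t = u" using leaf symE[OF tV w'V tw] tV by blast
      then show False using degt du1 by simp
    qed
    define N where "N = {z\<in>V. E w' z}"
    define a where "a = d w' u"
    have NS: "\<forall>z\<in>N. z \<notin> S"
    proof
      fix z assume z: "z \<in> N"
      show "z \<notin> S"
      proof
        assume zS: "z \<in> S"
        have "E z w'" using z symE[OF w'V] unfolding N_def by blast
        then show False using leaf zS w'V wu by blast
      qed
    qed
    have injN: "inj_on (\<lambda>z. d z u) N"
      by (rule inj_onI) (use injV NS in \<open>auto simp: N_def\<close>)
    have imgN: "(\<lambda>z. d z u) ` N \<subseteq> {a - 1, a + 1}"
    proof
      fix b assume "b \<in> (\<lambda>z. d z u) ` N"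
      then obtain z where z: "z \<in> N" "b = d z u" by blast
      have zV: "z \<in> V" and ez: "E w' z" using z unfolding N_def by auto
      have "z \<noteq> w'" using ez irr by blast
      then have "d z u \<noteq> a" using injV[OF zV w'V] NS z(1) w'S unfolding a_def by blast
      moreover have "d z u \<le> a + 1" using gd_nb[OF w'V zV uV ez] unfolding a_def .
      moreover have "a \<le> d z u + 1" using gd_nb[OF zV w'V uV symE[OF w'V zV ez]] unfolding a_def .
      ultimately show "b \<in> {a - 1, a + 1}" using z(2) by auto
    qed
    have "card N = card ((\<lambda>z. d z u) ` N)" using card_image[OF injN] by simp
    also have "\<dots> \<le> card {a - 1, a + 1}" using imgN by (intro card_mono) auto
    also have "\<dots> \<le> 2" by (simp add: card_insert_if)
    finally have "deg w' \<le> 2" unfolding deg_def N_def .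
    then have du2: "card {z\<in>V. E u z} \<le> 2" using degw unfolding deg_def by simp
    have SN: "S \<subseteq> {z\<in>V. E u z}" using Su SV by blast
    have NuS: "{z\<in>V. E u z} = S"
      using card_seteq[OF nb_fin SN] du2 c2 by simp
    have "w' \<in> insert u S"
    proof (rule closure[of u "insert u S" w'])
      show "u \<in> insert u S" by simp
      show "u \<in> V" using uV .
      show "w' \<in> V" using w'V .
      fix x y assume "x \<in> insert u S" "y \<in> V" "E x y"
      then show "y \<in> insert u S" using NuS leaf by blast
    qed
    then show False using wu w'S by blast
  qed
  have tu: "E t u" using tw w'u by simp
  have ut: "E u t" using symE[OF tV uV tu] .
  have tleaf: "\<forall>w\<in>V. E t w \<longrightarrow> w = u" using deg1'[OF degt tu uV] .
  have du: "d z u = 1" if zV: "z \<in> V" and ezu: "E z u" for z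
  proof -
    have "z \<noteq> u" using ezu irr by blast
    then have "d z u \<noteq> 0" using gd_0[OF zV uV] by blast
    moreover have "d z u \<le> 1" using gd_adj[OF zV uV ezu] .
    ultimately show ?thesis by simp
  qed
  have NU: "z = t \<or> z \<in> S" if zV: "z \<in> V" and ez: "E u z" for z
  proof (rule disjCI)
    assume zS: "z \<notin> S"
    have "d z u = 1" using du[OF zV symE[OF uV zV ez]] .
    moreover have "d t u = 1" using du[OF tV tu] .
    ultimately show "z = t" using injV[OF zV tV zS tS'] by simp
  qed
  have all: "\<forall>y\<in>V. y \<in> insert u (insert t S)"
  proof
    fix y assume yV: "y \<in> V"
    show "y \<in> insert u (insert t S)"
    proof (rule closure[of u "insert u (insert t S)" y])
      show "u \<in> insert u (insert t S)" by simp
      show "u \<in> V" using uV .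
      show "y \<in> V" using yV .
      fix x z assume x: "x \<in> insert u (insert t S)" and zV: "z \<in> V" and e: "E x z"
      show "z \<in> insert u (insert t S)"
      proof (cases "x = u")
        case True then show ?thesis using NU[OF zV] e by blast
      next
        case False
        then have "x = t \<or> x \<in> S" using x by blast
        then have "z = u" using tleaf leaf e zV by blast
        then show ?thesis by simp
      qed
    qed
  qed
  have center: "\<forall>v\<in>V. v \<noteq> u \<longrightarrow> E u v \<and> (\<forall>w\<in>V. E v w \<longrightarrow> w = u)"
  proof (intro ballI impI)
    fix v assume vV: "v \<in> V" and vu: "v \<noteq> u"
    then have "v = t \<or> v \<in> S" using all by blast
    then show "E u v \<and> (\<forall>w\<in>V. E v w \<longrightarrow> w = u)" using ut tleaf Su leaf by blast
  qed
  have "insert u S \<subseteq> V" using uV SV by blast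
  then have "card (insert u S) \<le> card V" using finV by (intro card_mono)
  moreover have "card (insert u S) = Suc (card S)" using uS finS by simp
  ultimately have "card V \<ge> 3" using c2 by simp
  then show ?thesis using uV center by blast
qed
end


context tr
begin

lemma hard:
  assumes c2: "card V \<ge> 2"
    and np: "\<not> (\<exists>n\<ge>2. graph_iso V E (path_V n) path_E)"
    and ns: "\<not> (\<exists>n\<ge>2. graph_iso V E (star_V n) star_E)"
  shows "distinguishing_number V E \<le> metric_dim V E"
proof -
  have resV: "resolving V E V" unfolding resolving_def
  proof (intro conjI ballI impI)
    show "V \<subseteq> V" by simp
    fix x y assume x: "x \<in> V" and y: "y \<in> V" and xy: "x \<noteq> y"
    have "d y x \<noteq> 0" using gd_0[OF y x] xy by blast
    then have "d x x \<noteq> d y x" using x by simp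
    then show "\<exists>s\<in>V. d x s \<noteq> d y s" using x by blast
  qed
  have "\<exists>k S. resolving V E S \<and> card S = k" using resV by blast
  then have "\<exists>S. resolving V E S \<and> card S = metric_dim V E"
    unfolding metric_dim_def by (rule LeastI_ex)
  then obtain S where S: "resolving V E S" and kS: "card S = metric_dim V E" by blast
  define k where "k = metric_dim V E"
  have SV: "S \<subseteq> V" using res_sub[OF S] .
  have finS: "finite S" using res_fin[OF S] .
  obtain x0 y0 where xy0: "x0 \<in> V" "y0 \<in> V" "x0 \<noteq> y0"
  proof -
    have "\<not> card V \<le> 1" using c2 by simp
    then have "\<not> (\<forall>x\<in>V. \<forall>y\<in>V. x = y)" using card_le_Suc0_iff_eq[OF finV] by simp
    then show ?thesis using that by blast
  qed
  have S0: "S \<noteq> {}"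
  proof
    assume "S = {}"
    then show False using S xy0 unfolding resolving_def by blast
  qed
  have S1: "card S \<noteq> 1"
  proof
    assume "card S = 1"
    then obtain s where "S = {s}" by (rule card_1_singletonE)
    then have "graph_iso V E (path_V (card V)) path_E" using path_of_single S c2 by simp
    then show False using np c2 by blast
  qed
  have cS2: "card S \<ge> 2" using S0 S1 finS by (cases "card S") (auto simp: card_0_eq)
  obtain s0 s1 where s01: "s0 \<in> S" "s1 \<in> S" "s0 \<noteq> s1"
  proof -
    have "\<not> card S \<le> 1" using cS2 by simp
    then have "\<not> (\<forall>x\<in>S. \<forall>y\<in>S. x = y)" using card_le_Suc0_iff_eq[OF finS] by simp
    then show ?thesis using that by blast
  qed
  show ?thesis
  proof (cases "\<exists>a\<in>S. \<exists>b\<in>S. a \<noteq> b \<and> deg a \<noteq> deg b")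
    case True
    then obtain a b where "a \<in> S" "b \<in> S" "a \<noteq> b" "deg a \<noteq> deg b" by blast
    then show ?thesis using schemeB[OF S kS] by blast
  next
    case False
    have same: "\<And>a b. a \<in> S \<Longrightarrow> b \<in> S \<Longrightarrow> deg a = deg b"
    proof -
      fix a b assume "a \<in> S" "b \<in> S"
      then show "deg a = deg b" using False by (cases "a = b") auto
    qed
    show ?thesis
    proof (cases "\<exists>u\<in>V. u \<notin> S \<and> (\<exists>a\<in>S. \<exists>b\<in>S. a \<noteq> b \<and> deg u \<noteq> deg a \<and> d u a \<noteq> d u b)")
      case True
      then obtain u a b where u: "u \<in> V" "u \<notin> S" and ab: "a \<in> S" "b \<in> S" "a \<noteq> b"
        and dg: "deg u \<noteq> deg a" and dd: "d u a \<noteq> d u b" by blast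
      have "deg u \<noteq> deg b" using dg same[OF ab(1,2)] by simp
      then show ?thesis using schemeC[OF S kS ab u dg _ dd] by blast
    next
      case False
      then have noC: "\<And>u a b. u \<in> V \<Longrightarrow> u \<notin> S \<Longrightarrow> a \<in> S \<Longrightarrow> b \<in> S \<Longrightarrow> deg u \<noteq> deg a \<Longrightarrow> d u a = d u b"
        by (metis)
      show ?thesis
      proof (cases "deg s0 = 1")
        case True
        have degS: "\<forall>a\<in>S. deg a = 1" using same s01(1) True by metis
        show ?thesis
        proof (cases "\<exists>f. automorphism V E f \<and> f s0 \<notin> S")
          case True
          then obtain f where f: "automorphism V E f" "f s0 \<notin> S" by blast
          have noC': "\<And>u a b. u \<in> V \<Longrightarrow> u \<notin> S \<Longrightarrow> deg u \<noteq> 1 \<Longrightarrow> a \<in> S \<Longrightarrow> b \<in> S \<Longrightarrow> d u a = d u b"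
            using noC degS by metis
          obtain c where c: "c \<in> V" "\<forall>v\<in>V. v \<noteq> c \<longrightarrow> E c v \<and> (\<forall>w\<in>V. E v w \<longrightarrow> w = c)"
            and c3: "card V \<ge> 3"
            using deltaOne[OF S cS2 degS noC' s01(1) f] by blast
          have "card V = Suc (card V - 1)" using c3 by simp
          then have "graph_iso V E (star_V (card V - 1)) star_E" using star_iso[OF c] by blast
          moreover have "card V - 1 \<ge> 2" using c3 by simp
          ultimately show ?thesis using ns by blast
        next
          case False
          then have "\<And>f. automorphism V E f \<Longrightarrow> f s0 \<in> S" by blast
          then show ?thesis using schemeA[OF S kS s01(1)] by blast
        qed
      next
        case False
        have "False"
        proof (rule deltaNot1[of s0 s1])
          show "s0 \<in> V" "s1 \<in> V" using s01 SV by auto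
          show "s0 \<noteq> s1" using s01 by simp
          show "deg s0 \<noteq> 1" using False .
          fix u assume uV: "u \<in> V" and du: "deg u = 1"
          have "u \<notin> S" using du same[OF s01(1)] False by metis
          then show "d u s0 = d u s1" using noC[OF uV _ s01(1,2)] du False by simp
        qed
        then show ?thesis by simp
      qed
    qed
  qed
qed

end


lemma res_transfer:
  assumes f: "isom V E W F f" and S: "resolving V E S"
  shows "resolving W F (f ` S) \<and> card (f ` S) = card S"
proof -
  have b: "bij_betw f V W" using f by (simp add: isom_def)
  have SV: "S \<subseteq> V" using S by (simp add: resolving_def)
  have "resolving W F (f ` S)" unfolding resolving_def
  proof (intro conjI ballI impI)
    show "f ` S \<subseteq> W" using SV b by (auto simp: bij_betw_def)
    fix x' y' assume x': "x' \<in> W" and y': "y' \<in> W" and ne: "x' \<noteq> y'"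
    obtain x where x: "x \<in> V" "x' = f x" using x' b by (auto simp: bij_betw_def)
    obtain y where y: "y \<in> V" "y' = f y" using y' b by (auto simp: bij_betw_def)
    have "x \<noteq> y" using ne x y by auto
    then obtain s where s: "s \<in> S" "gdist V E x s \<noteq> gdist V E y s" using S x y unfolding resolving_def by blast
    have sV: "s \<in> V" using s SV by blast
    have "gdist W F x' (f s) \<noteq> gdist W F y' (f s)"
      using s gdist_isom[OF f x(1) sV] gdist_isom[OF f y(1) sV] x y by simp
    then show "\<exists>s\<in>f ` S. gdist W F x' s \<noteq> gdist W F y' s" using s by blast
  qed
  moreover have "card (f ` S) = card S"
    using b SV by (intro card_image) (auto simp: bij_betw_def intro: inj_on_subset)
  ultimately show ?thesis by simp
qed

lemma dim_iso:
  assumes "graph_iso V E W F"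
  shows "metric_dim V E = metric_dim W F"
proof -
  obtain f where f: "isom V E W F f" using assms unfolding graph_iso_def isom_def by blast
  have g: "isom W F V E (inv_into V f)" using isom_inv[OF f] .
  have "(\<exists>S. resolving V E S \<and> card S = k) \<longleftrightarrow> (\<exists>T. resolving W F T \<and> card T = k)" for k
    using res_transfer[OF f] res_transfer[OF g] by metis
  then show ?thesis unfolding metric_dim_def by simp
qed

lemma dc_transfer:
  assumes f: "isom V E W F f" and c: "distinguishing_coloring V E k c"
  shows "distinguishing_coloring W F k (c \<circ> inv_into V f)"
proof -
  let ?g = "inv_into V f"
  have b: "bij_betw f V W" using f by (simp add: isom_def)
  have g: "isom W F V E ?g" using isom_inv[OF f] .
  have gb: "bij_betw ?g W V" using g by (simp add: isom_def)
  have gf: "\<And>x. x \<in> V \<Longrightarrow> ?g (f x) = x" using b by (simp add: bij_betw_def)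
  have fg: "\<And>y. y \<in> W \<Longrightarrow> f (?g y) = y" using b by (simp add: bij_betw_inv_into_right)
  show ?thesis unfolding distinguishing_coloring_def
  proof (intro conjI allI impI)
    have "?g ` W = V" using gb by (simp add: bij_betw_def)
    moreover have "(c \<circ> ?g) ` W = c ` (?g ` W)" by (rule image_comp[symmetric])
    ultimately show "(c \<circ> ?g) ` W \<subseteq> {..<k}" using c unfolding distinguishing_coloring_def
      by simp
    fix h assume h: "automorphism W F h \<and> (\<forall>x\<in>W. (c \<circ> ?g) (h x) = (c \<circ> ?g) x)"
    have hi: "isom W F W F h" using h by (simp add: automorphism_isom)
    have "isom V E V E (?g \<circ> h \<circ> f)" using isom_comp[OF isom_comp[OF f hi] g] by (simp add: comp_assoc)
    then have a: "automorphism V E (?g \<circ> h \<circ> f)" by (simp add: automorphism_isom)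
    have fW: "\<And>x. x \<in> V \<Longrightarrow> f x \<in> W" using b by (auto simp: bij_betw_def)
    have "\<forall>x\<in>V. c ((?g \<circ> h \<circ> f) x) = c x"
    proof
      fix x assume x: "x \<in> V"
      have "c (?g (h (f x))) = c (?g (f x))" using h fW[OF x] by simp
      then show "c ((?g \<circ> h \<circ> f) x) = c x" using gf[OF x] by simp
    qed
    then have fix1: "\<forall>x\<in>V. ?g (h (f x)) = x" using c a unfolding distinguishing_coloring_def by auto
    show "\<forall>x\<in>W. h x = x"
    proof
      fix y assume y: "y \<in> W"
      have gy: "?g y \<in> V" using gb y by (auto simp: bij_betw_def)
      have hy: "h y \<in> W" using h y by (auto simp: automorphism_def bij_betw_def)
      have "?g (h y) = ?g y" using fix1 gy fg[OF y] by metis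
      then have "f (?g (h y)) = f (?g y)" by simp
      then show "h y = y" using fg[OF y] fg[OF hy] by simp
    qed
  qed
qed

lemma D_iso:
  assumes "graph_iso V E W F"
  shows "distinguishing_number V E = distinguishing_number W F"
proof -
  obtain f where f: "isom V E W F f" using assms unfolding graph_iso_def isom_def by blast
  have g: "isom W F V E (inv_into V f)" using isom_inv[OF f] .
  have "(\<exists>c. distinguishing_coloring V E k c) \<longleftrightarrow> (\<exists>c. distinguishing_coloring W F k c)" for k
    using dc_transfer[OF f] dc_transfer[OF g] by metis
  then show ?thesis unfolding distinguishing_number_def by simp
qed


lemma conn_root:
  assumes sym: "\<And>x y. x \<in> V \<Longrightarrow> y \<in> V \<Longrightarrow> E x y \<Longrightarrow> E y x"
    and r: "\<And>x. x \<in> V \<Longrightarrow> \<exists>p. walk V E p \<and> hd p = r \<and> last p = x"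
  shows "\<And>x y. x \<in> V \<Longrightarrow> y \<in> V \<Longrightarrow> \<exists>p. walk V E p \<and> hd p = x \<and> last p = y"
proof -
  fix x y assume x: "x \<in> V" and y: "y \<in> V"
  obtain p where p: "walk V E p" "hd p = r" "last p = x" using r[OF x] by blast
  obtain q where q: "walk V E q" "hd q = r" "last q = y" using r[OF y] by blast
  have rp: "walk V E (rev p)" using walk_rev[OF sym p(1)] by blast
  have pne: "p \<noteq> []" and qne: "q \<noteq> []" using p(1) q(1) walk_nonempty by auto
  have w: "walk V E (rev p @ tl q)" using walk_join[OF rp q(1)] p q pne by (simp add: last_rev)
  have "hd (rev p @ tl q) = x" using pne p by (simp add: hd_rev)
  moreover have "last (rev p @ tl q) = y"
  proof (cases "tl q")
    case Nil
    then have "q = [r]" using qne q(2) by (cases q) auto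
    then show ?thesis using Nil q(3) pne p(2) by (simp add: last_rev)
  next
    case (Cons a l)
    then show ?thesis using q(3) qne by (cases q) auto
  qed
  ultimately show "\<exists>p. walk V E p \<and> hd p = x \<and> last p = y" using w by blast
qed

context cg
begin

lemma res_V: "resolving V E V" unfolding resolving_def
proof (intro conjI ballI impI)
  show "V \<subseteq> V" by simp
  fix x y assume x: "x \<in> V" and y: "y \<in> V" and xy: "x \<noteq> y"
  have "d y x \<noteq> 0" using gd_0[OF y x] xy by blast
  then have "d x x \<noteq> d y x" using x by simp
  then show "\<exists>s\<in>V. d x s \<noteq> d y s" using x by blast
qed

lemma dim_one:
  assumes c2: "card V \<ge> 2" and S: "resolving V E {s}"
  shows "metric_dim V E = 1"
  unfolding metric_dim_def
proof (rule Least_equality)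
  show "\<exists>S. resolving V E S \<and> card S = 1" using S by (intro exI[of _ "{s}"]) simp
  fix k assume "\<exists>S. resolving V E S \<and> card S = k"
  then obtain T where T: "resolving V E T" "card T = k" by blast
  obtain x0 y0 where xy0: "x0 \<in> V" "y0 \<in> V" "x0 \<noteq> y0"
  proof -
    have "\<not> card V \<le> 1" using c2 by simp
    then have "\<not> (\<forall>x\<in>V. \<forall>y\<in>V. x = y)" using card_le_Suc0_iff_eq[OF finV] by simp
    then show ?thesis using that by blast
  qed
  have "T \<noteq> {}" using T(1) xy0 unfolding resolving_def by blast
  then show "1 \<le> k" using T res_fin[OF T(1)] by (cases k) (auto simp: card_0_eq)
qed

lemma no_dc0: "V \<noteq> {} \<Longrightarrow> \<not> distinguishing_coloring V E 0 c"
  unfolding distinguishing_coloring_def by auto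

lemma no_dc1:
  assumes f: "automorphism V E f" and x: "x \<in> V" "f x \<noteq> x"
  shows "\<not> distinguishing_coloring V E 1 c"
proof
  assume c: "distinguishing_coloring V E 1 c"
  then have "\<forall>v\<in>V. c v = 0" unfolding distinguishing_coloring_def by auto
  then have "\<forall>v\<in>V. c (f v) = c v" using aut_in[OF f] by simp
  then show False using c f x unfolding distinguishing_coloring_def by blast
qed

lemma D_ge2:
  assumes f: "automorphism V E f" and x: "x \<in> V" "f x \<noteq> x"
    and c2: "distinguishing_coloring V E 2 c"
  shows "distinguishing_number V E = 2"
  unfolding distinguishing_number_def
proof (rule Least_equality)
  show "\<exists>c. distinguishing_coloring V E 2 c" using c2 by blast
  fix k assume "\<exists>c. distinguishing_coloring V E k c"
  then obtain c' where c': "distinguishing_coloring V E k c'" by blast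
  have "V \<noteq> {}" using x by blast
  then have "k \<noteq> 0" using c' no_dc0[of c'] by (cases "k = 0") auto
  moreover have "k \<noteq> 1" using c' no_dc1[OF f x] by blast
  ultimately show "2 \<le> k" by simp
qed

end

lemma path_walk_upt: "i < n \<Longrightarrow> walk (path_V n) path_E [0..<Suc i]"
proof (induction i)
  case 0 then show ?case by (simp add: path_V_def)
next
  case (Suc i)
  have w: "walk (path_V n) path_E [0..<Suc i]" using Suc by simp
  have "walk (path_V n) path_E ([0..<Suc i] @ [Suc i])"
    by (rule walk_append[OF w]) (use Suc.prems in \<open>auto simp: path_V_def path_E_def\<close>)
  then show ?case by simp
qed

lemma path_cg: "cg (path_V n) path_E"
proof
  show "finite (path_V n)" by (simp add: path_V_def)
  show "\<And>x y. x \<in> path_V n \<Longrightarrow> y \<in> path_V n \<Longrightarrow> path_E x y \<Longrightarrow> path_E y x"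
    by (auto simp: path_E_def)
  show "\<And>x y. x \<in> path_V n \<Longrightarrow> y \<in> path_V n \<Longrightarrow> \<exists>p. walk (path_V n) path_E p \<and> hd p = x \<and> last p = y"
  proof (rule conn_root[of "path_V n" path_E 0])
    show "\<And>x y. x \<in> path_V n \<Longrightarrow> y \<in> path_V n \<Longrightarrow> path_E x y \<Longrightarrow> path_E y x"
      by (auto simp: path_E_def)
    fix x assume "x \<in> path_V n"
    then show "\<exists>p. walk (path_V n) path_E p \<and> hd p = 0 \<and> last p = x"
      using path_walk_upt[of x n] by (intro exI[of _ "[0..<Suc x]"]) (auto simp: path_V_def hd_upt last_upt simp del: upt_Suc)
  qed
qed

lemma path_hd_le: "walk (path_V n) path_E p \<Longrightarrow> hd p \<le> last p + (length p - 1)"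
proof (induction p rule: induct_list012)
  case 1 then show ?case by (simp add: walk_def)
next
  case (2 x) then show ?case by simp
next
  case (3 x y zs)
  then have "y \<le> last (y#zs) + (length (y#zs) - 1)" by simp
  moreover have "x \<le> Suc y" using 3(3) by (auto simp: path_E_def)
  ultimately show ?case by simp
qed

lemma path_d0:
  assumes "i < n"
  shows "gdist (path_V n) path_E i 0 = i"
proof -
  interpret P: cg "path_V n" path_E by (rule path_cg)
  have iV: "i \<in> path_V n" and zV: "0 \<in> path_V n" using assms by (auto simp: path_V_def)
  have w: "walk (path_V n) path_E (rev [0..<Suc i])"
    using walk_rev[OF P.symE path_walk_upt[OF assms]] by blast
  have "P.d i 0 \<le> length (rev [0..<Suc i]) - 1"
    by (rule P.gd_le[OF w]) (simp_all add: hd_rev last_rev)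
  then have 1: "P.d i 0 \<le> i" by simp
  obtain p where p: "walk (path_V n) path_E p" "hd p = i" "last p = 0" "length p = Suc (P.d i 0)"
    using P.gd_ex[OF iV zV] by blast
  have "i \<le> P.d i 0" using path_hd_le[OF p(1)] p by simp
  with 1 show ?thesis by simp
qed

lemma path_dim:
  assumes "n \<ge> 2"
  shows "metric_dim (path_V n) path_E = 1"
proof -
  interpret P: cg "path_V n" path_E by (rule path_cg)
  have "resolving (path_V n) path_E {0}" unfolding resolving_def
    using assms path_d0[of _ n] by (auto simp: path_V_def)
  moreover have "card (path_V n) \<ge> 2" using assms by (simp add: path_V_def)
  ultimately show ?thesis using P.dim_one by blast
qed

lemma path_D:
  assumes n2: "n \<ge> 2"
  shows "distinguishing_number (path_V n) path_E = 2"
proof -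
  interpret P: cg "path_V n" path_E by (rule path_cg)
  define r where "r i = n - 1 - i" for i
  have rr: "\<And>i. i \<in> path_V n \<Longrightarrow> r (r i) = i" unfolding r_def path_V_def by auto
  have rV: "\<And>i. i \<in> path_V n \<Longrightarrow> r i \<in> path_V n" unfolding r_def path_V_def using n2 by auto
  have ar: "automorphism (path_V n) path_E r" unfolding automorphism_def
  proof (intro conjI ballI)
    show "bij_betw r (path_V n) (path_V n)"
      by (rule bij_betw_byWitness[of _ r]) (use rr rV in auto)
    fix x y assume "x \<in> path_V n" "y \<in> path_V n"
    then show "path_E x y = path_E (r x) (r y)" unfolding r_def path_V_def path_E_def by auto
  qed
  have z: "0 \<in> path_V n" "r 0 \<noteq> 0" using n2 unfolding r_def path_V_def by auto
  define c :: "nat \<Rightarrow> nat" where "c i = (if i = 0 then 1 else 0)" for i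
  have res: "resolving (path_V n) path_E {0}" unfolding resolving_def
    using n2 path_d0[of _ n] by (auto simp: path_V_def)
  have "distinguishing_coloring (path_V n) path_E 2 c" unfolding distinguishing_coloring_def
  proof (intro conjI allI impI)
    show "c ` path_V n \<subseteq> {..<2}" unfolding c_def by auto
    fix f assume f: "automorphism (path_V n) path_E f \<and> (\<forall>x\<in>path_V n. c (f x) = c x)"
    then have "c (f 0) = 1" using z unfolding c_def by auto
    then have "f 0 = 0" unfolding c_def by (auto split: if_splits)
    then show "\<forall>x\<in>path_V n. f x = x" using P.aut_fix[OF res] f by blast
  qed
  then show ?thesis using P.D_ge2[OF ar z] by blast
qed


lemma star_cg: "cg (star_V n) star_E"
proof
  show "finite (star_V n)" by (simp add: star_V_def)
  show "\<And>x y. x \<in> star_V n \<Longrightarrow> y \<in> star_V n \<Longrightarrow> star_E x y \<Longrightarrow> star_E y x"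
    by (auto simp: star_E_def)
  fix x y assume x: "x \<in> star_V n" and y: "y \<in> star_V n"
  have r: "\<exists>p. walk (star_V n) star_E p \<and> hd p = 0 \<and> last p = v" if v: "v \<in> star_V n" for v
  proof (cases "v = 0")
    case True then show ?thesis by (intro exI[of _ "[0]"]) (simp add: star_V_def)
  next
    case False then show ?thesis using v by (intro exI[of _ "[0, v]"]) (simp add: star_V_def star_E_def)
  qed
  have sym: "\<And>x y. x \<in> star_V n \<Longrightarrow> y \<in> star_V n \<Longrightarrow> star_E x y \<Longrightarrow> star_E y x"
    by (auto simp: star_E_def)
  show "\<exists>p. walk (star_V n) star_E p \<and> hd p = x \<and> last p = y"
    using conn_root[of "star_V n" star_E 0, OF sym r x y] by blast
qed

context
  fixes n :: nat
  assumes n2: "n \<ge> 2"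
begin

interpretation St: cg "star_V n" star_E by (rule star_cg)

lemma star_d0: assumes "j \<in> {1..n}" shows "St.d 0 j = 1"
proof -
  have jV: "j \<in> star_V n" and zV: "0 \<in> star_V n" using assms by (auto simp: star_V_def)
  have "St.d 0 j \<le> 1" using St.gd_adj[OF zV jV] assms by (simp add: star_E_def)
  moreover have "St.d 0 j \<noteq> 0" using St.gd_0[OF zV jV] assms by auto
  ultimately show ?thesis by simp
qed

lemma star_dl: assumes "i \<in> {1..n}" "j \<in> {1..n}" "i \<noteq> j" shows "St.d i j = 2"
proof -
  have iV: "i \<in> star_V n" and jV: "j \<in> star_V n" and zV: "0 \<in> star_V n"
    using assms by (auto simp: star_V_def)
  have "St.d i 0 = 1" using star_d0[OF assms(1)] St.gd_sym[OF iV zV] by simp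
  then have "St.d i j \<le> 2" using St.gd_tri[OF iV zV jV] star_d0[OF assms(2)] by simp
  moreover have "St.d i j \<noteq> 0" using St.gd_0[OF iV jV] assms by auto
  moreover have "St.d i j \<noteq> 1"
  proof
    assume "St.d i j = 1"
    then have "star_E i j" using St.gd_1[OF iV jV] by simp
    then show False using assms by (simp add: star_E_def)
  qed
  ultimately show ?thesis by simp
qed

definition swp :: "nat \<Rightarrow> nat \<Rightarrow> nat \<Rightarrow> nat" where
  "swp a b v = (if v = a then b else if v = b then a else v)"

lemma swp_aut:
  assumes a: "a \<in> {1..n}" and b: "b \<in> {1..n}"
  shows "automorphism (star_V n) star_E (swp a b)"
  unfolding automorphism_def
proof (intro conjI ballI)
  show "bij_betw (swp a b) (star_V n) (star_V n)"
    by (rule bij_betw_byWitness[of _ "swp a b"]) (use a b in \<open>auto simp: swp_def star_V_def\<close>)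
  fix x y assume "x \<in> star_V n" "y \<in> star_V n"
  have z: "\<And>v. swp a b v = 0 \<longleftrightarrow> v = 0" using a b unfolding swp_def by auto
  show "star_E x y = star_E (swp a b x) (swp a b y)" unfolding star_E_def using z by simp
qed

lemma star_dim: "metric_dim (star_V n) star_E = n - 1"
  unfolding metric_dim_def
proof (rule Least_equality)
  let ?S = "{1..<n}"
  have res: "resolving (star_V n) star_E ?S" unfolding resolving_def
  proof (intro conjI ballI impI)
    show "?S \<subseteq> star_V n" by (auto simp: star_V_def)
    fix x y assume x: "x \<in> star_V n" and y: "y \<in> star_V n" and xy: "x \<noteq> y"
    show "\<exists>s\<in>?S. St.d x s \<noteq> St.d y s"
    proof (cases "x \<in> ?S")
      case True
      have "St.d y x \<noteq> 0" using St.gd_0[OF y x] xy by auto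
      then show ?thesis using True x by (intro bexI[of _ x]) auto
    next
      case False
      show ?thesis
      proof (cases "y \<in> ?S")
        case True
        have "St.d x y \<noteq> 0" using St.gd_0[OF x y] xy by auto
        then show ?thesis using True y by (intro bexI[of _ y]) auto
      next
        case False
        have xy0: "x \<in> {0, n}" "y \<in> {0, n}" using x y \<open>x \<notin> ?S\<close> False by (auto simp: star_V_def)
        have oV: "1 \<in> star_V n" using n2 by (simp add: star_V_def)
        have d01: "St.d 0 1 = 1" using star_d0[of 1] n2 by simp
        have dn1: "St.d n 1 = 2" using star_dl[of n 1] n2 by simp
        have "St.d x 1 \<noteq> St.d y 1" using xy0 xy d01 dn1 by auto
        then show ?thesis using n2 by (intro bexI[of _ 1]) auto
      qed
    qed
  qed
  show "\<exists>S. resolving (star_V n) star_E S \<and> card S = n - 1" using res by (intro exI[of _ ?S]) simp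
  fix k assume "\<exists>S. resolving (star_V n) star_E S \<and> card S = k"
  then obtain T where T: "resolving (star_V n) star_E T" "card T = k" by blast
  show "n - 1 \<le> k"
  proof (rule ccontr)
    assume "\<not> n - 1 \<le> k"
    then have kl: "k + 2 \<le> n" by simp
    have fT: "finite T" using St.res_fin[OF T(1)] .
    have "card {1..n} - card T \<le> card ({1..n} - T)" using fT by (rule diff_card_le_card_Diff)
    then have c2: "card ({1..n} - T) \<ge> 2" using T(2) kl by simp
    obtain a b where ab: "a \<in> {1..n} - T" "b \<in> {1..n} - T" "a \<noteq> b"
    proof -
      have "\<not> card ({1..n} - T) \<le> 1" using c2 by simp
      then have "\<not> (\<forall>x\<in>{1..n} - T. \<forall>y\<in>{1..n} - T. x = y)" using card_le_Suc0_iff_eq[of "{1..n} - T"] by simp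
      then show ?thesis using that by blast
    qed
    have sa: "automorphism (star_V n) star_E (swp a b)" using swp_aut ab by blast
    have aV: "a \<in> star_V n" and bV: "b \<in> star_V n" using ab by (auto simp: star_V_def)
    obtain s where s: "s \<in> T" "St.d a s \<noteq> St.d b s" using T(1) aV bV ab(3) unfolding resolving_def by blast
    have sV: "s \<in> star_V n" using s T(1) unfolding resolving_def by blast
    have "swp a b s = s" using s ab unfolding swp_def by auto
    moreover have "swp a b a = b" unfolding swp_def by simp
    ultimately have "St.d b s = St.d a s" using St.aut_gd[OF sa aV sV] by simp
    then show False using s(2) by simp
  qed
qed

lemma star_deg0: "St.deg 0 = n"
proof -
  have "{y \<in> star_V n. star_E 0 y} = {1..n}" by (auto simp: star_V_def star_E_def)
  then show ?thesis unfolding St.deg_def by simp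
qed

lemma star_degl: assumes "j \<in> {1..n}" shows "St.deg j = 1"
proof -
  have "{y \<in> star_V n. star_E j y} = {0}" using assms by (auto simp: star_V_def star_E_def)
  then show ?thesis unfolding St.deg_def by simp
qed

lemma star_D: "distinguishing_number (star_V n) star_E = n"
  unfolding distinguishing_number_def
proof (rule Least_equality)
  define c :: "nat \<Rightarrow> nat" where "c v = v - 1" for v
  have "distinguishing_coloring (star_V n) star_E n c" unfolding distinguishing_coloring_def
  proof (intro conjI allI impI)
    show "c ` star_V n \<subseteq> {..<n}" using n2 unfolding c_def star_V_def by auto
    fix f assume f: "automorphism (star_V n) star_E f \<and> (\<forall>x\<in>star_V n. c (f x) = c x)"
    have fa: "automorphism (star_V n) star_E f" using f by blast
    have zV: "0 \<in> star_V n" by (simp add: star_V_def)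
    have f0V: "f 0 \<in> star_V n" using St.aut_in[OF fa zV] .
    have f0: "f 0 = 0"
    proof (rule ccontr)
      assume "f 0 \<noteq> 0"
      then have "f 0 \<in> {1..n}" using f0V by (auto simp: star_V_def)
      then have "St.deg (f 0) = 1" by (rule star_degl)
      then show False using St.aut_deg[OF fa zV] star_deg0 n2 by simp
    qed
    show "\<forall>x\<in>star_V n. f x = x"
    proof
      fix x assume x: "x \<in> star_V n"
      show "f x = x"
      proof (cases "x = 0")
        case True then show ?thesis using f0 by simp
      next
        case False
        have "f x \<noteq> f 0" using inj_on_eq_iff[OF St.aut_inj[OF fa] x zV] False by simp
        then have fx0: "f x \<noteq> 0" using f0 by simp
        have "c (f x) = c x" using f x by blast
        then show ?thesis using fx0 False unfolding c_def by simp
      qed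
    qed
  qed
  then show "\<exists>c. distinguishing_coloring (star_V n) star_E n c" by blast
  fix k assume "\<exists>c. distinguishing_coloring (star_V n) star_E k c"
  then obtain c' where c': "distinguishing_coloring (star_V n) star_E k c'" by blast
  show "n \<le> k"
  proof (rule ccontr)
    assume "\<not> n \<le> k"
    have sub: "{1..n} \<subseteq> star_V n" by (auto simp: star_V_def)
    have "c' ` star_V n \<subseteq> {..<k}" using c' unfolding distinguishing_coloring_def by blast
    then have img: "c' ` {1..n} \<subseteq> {..<k}" using image_mono[OF sub, of c'] by (rule order_trans[rotated])
    have "\<not> inj_on c' {1..n}"
    proof
      assume "inj_on c' {1..n}"
      then have "card {1..n} \<le> card {..<k}" using card_inj_on_le[OF _ img] by simp
      then show False using \<open>\<not> n \<le> k\<close> by simp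
    qed
    then obtain a b where ab: "a \<in> {1..n}" "b \<in> {1..n}" "a \<noteq> b" "c' a = c' b"
      unfolding inj_on_def by blast
    have sa: "automorphism (star_V n) star_E (swp a b)" using swp_aut ab by blast
    have "\<forall>x\<in>star_V n. c' (swp a b x) = c' x" using ab unfolding swp_def by auto
    then have "\<forall>x\<in>star_V n. swp a b x = x" using c' sa unfolding distinguishing_coloring_def by blast
    moreover have "a \<in> star_V n" using ab by (auto simp: star_V_def)
    ultimately show False using ab unfolding swp_def by auto
  qed
qed

end


lemma tree_tr: assumes "is_tree V E" shows "tr V E"
proof -
  have sg: "simple_graph V E" and cn: "connected_graph V E" and nc: "\<nexists>c. is_cycle V E c"
    using assms unfolding is_tree_def by auto
  show ?thesis
  proof (unfold_locales)
    show "finite V" using sg unfolding simple_graph_def by blast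
    show "\<And>x y. x \<in> V \<Longrightarrow> y \<in> V \<Longrightarrow> E x y \<Longrightarrow> E y x" using sg unfolding simple_graph_def by blast
    show "\<And>x y. x \<in> V \<Longrightarrow> y \<in> V \<Longrightarrow> \<exists>p. walk V E p \<and> hd p = x \<and> last p = y"
      using cn unfolding connected_graph_def by blast
    show "\<And>x. \<not> E x x" using sg unfolding simple_graph_def by blast
    show "\<And>c. \<not> is_cycle V E c" using nc by blast
  qed
qed

theorem theorem3p2:
  fixes V :: "'a set" and E :: "'a \<Rightarrow> 'a \<Rightarrow> bool"
  assumes "is_tree V E" and "card V \<ge> 2"
  shows "distinguishing_number V E = metric_dim V E + 1 \<longleftrightarrow>
         (\<exists>n\<ge>2. graph_iso V E (path_V n) path_E \<or> graph_iso V E (star_V n) star_E)"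
proof -
  interpret T: tr V E using tree_tr[OF assms(1)] .
  show ?thesis
  proof
    assume eq: "distinguishing_number V E = metric_dim V E + 1"
    show "\<exists>n\<ge>2. graph_iso V E (path_V n) path_E \<or> graph_iso V E (star_V n) star_E"
    proof (rule ccontr)
      assume h: "\<not> (\<exists>n\<ge>2. graph_iso V E (path_V n) path_E \<or> graph_iso V E (star_V n) star_E)"
      have "distinguishing_number V E \<le> metric_dim V E"
        by (rule T.hard) (use assms(2) h in auto)
      then show False using eq by simp
    qed
  next
    assume "\<exists>n\<ge>2. graph_iso V E (path_V n) path_E \<or> graph_iso V E (star_V n) star_E"
    then obtain n where n2: "n \<ge> 2" and iso: "graph_iso V E (path_V n) path_E \<or> graph_iso V E (star_V n) star_E"
      by blast
    from iso show "distinguishing_number V E = metric_dim V E + 1"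
    proof
      assume i: "graph_iso V E (path_V n) path_E"
      have "distinguishing_number V E = 2" using D_iso[OF i] path_D[OF n2] by simp
      moreover have "metric_dim V E = 1" using dim_iso[OF i] path_dim[OF n2] by simp
      ultimately show ?thesis by simp
    next
      assume i: "graph_iso V E (star_V n) star_E"
      have "distinguishing_number V E = n" using D_iso[OF i] star_D[OF n2] by simp
      moreover have "metric_dim V E = n - 1" using dim_iso[OF i] star_dim[OF n2] by simp
      ultimately show ?thesis using n2 by simp
    qed
  qed
qed


end
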